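(* There is an absolute constant $c>0$ such that for all $n\ge 3$ and $\tau\ge 1$ there exist $\varepsilon>0$ and $n$ entities moving in $\mathbb{R}^1$ along piecewise-linear trajectories with vertices at common times $t_0<\dots<t_\tau$ for which every central trajectory has complexity at least $c\,\tau n^2$.
   Context: Setting: $\mathcal{X}$ is a set of $n$ entities, each moving in $\mathbb{R}^d$ along a piecewise-linear trajectory $\sigma:[t_0,t_\tau]\to\mathbb{R}^d$ with vertices at the common times $t_0<\dots<t_\tau$. A parameter $\varepsilon\ge 0$ is fixed. Two entities $\sigma,\psi$ are $\varepsilon$-connected at time $t$ if there is a sequence $\sigma=\sigma_0,\dots,\sigma_k=\psi$ of entities with $\|\sigma_j(t)\sigma_{j+1}(t)\|\le\varepsilon$ for all $j$. A trajectoid is a function $\mathcal{T}:[t_0,t_\tau]\to\mathcal{X}$ such that whenever $\mathcal{T}$ is discontinuous at time $t$, switching from $\sigma$ to $\psi$, the entities $\sigma,\psi$ are $\varepsilon$-connected at time $t$. $D(\sigma,t)=\max_{\psi\in\mathcal{X}}\|\sigma(t)\psi(t)\|$. A central trajectory is a trajectoid minimizing $\int_{t_0}^{t_\tau}D(\mathcal{T}(t),t)\,dt$. The complexity of a trajectoid is the number of pieces of the curve $t\mapsto\mathcal{T}(t)(t)$, i.e. the number of maximal time intervals on which $\mathcal{T}$ is a single entity and that entity moves linearly. *)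

theory Defs
  imports "HOL-Analysis.Analysis"
begin

text \<open>Setting: n entities indexed by 0..n-1, entity j moves in R^1 along X j.
  Common vertex times tt 0 < ... < tt tau.\<close>

definition strictly_increasing_times :: "(nat \<Rightarrow> real) \<Rightarrow> nat \<Rightarrow> bool" where
  "strictly_increasing_times tt tau \<longleftrightarrow> (\<forall>i<tau. tt i < tt (Suc i))"

definition piecewise_linear_entities ::
  "nat \<Rightarrow> (nat \<Rightarrow> real \<Rightarrow> real) \<Rightarrow> (nat \<Rightarrow> real) \<Rightarrow> nat \<Rightarrow> bool" where
  "piecewise_linear_entities n X tt tau \<longleftrightarrow>
     (\<forall>j<n. \<forall>i<tau. \<exists>a b. \<forall>s\<in>{tt i..tt (Suc i)}. X j s = a * s + b)"

definition distinct_entities ::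
  "nat \<Rightarrow> (nat \<Rightarrow> real \<Rightarrow> real) \<Rightarrow> (nat \<Rightarrow> real) \<Rightarrow> nat \<Rightarrow> bool" where
  "distinct_entities n X tt tau \<longleftrightarrow>
     (\<forall>i<n. \<forall>j<n. i \<noteq> j \<longrightarrow> (\<exists>s\<in>{tt 0..tt tau}. X i s \<noteq> X j s))"

definition eps_connected ::
  "nat \<Rightarrow> (nat \<Rightarrow> real \<Rightarrow> real) \<Rightarrow> real \<Rightarrow> real \<Rightarrow> nat \<Rightarrow> nat \<Rightarrow> bool" where
  "eps_connected n X eps t \<sigma> \<psi> \<longleftrightarrow>
     \<sigma> < n \<and> \<psi> < n \<and>
     (\<lambda>a b. a < n \<and> b < n \<and> \<bar>X a t - X b t\<bar> \<le> eps)\<^sup>*\<^sup>* \<sigma> \<psi>"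

definition Dmax :: "nat \<Rightarrow> (nat \<Rightarrow> real \<Rightarrow> real) \<Rightarrow> nat \<Rightarrow> real \<Rightarrow> real" where
  "Dmax n X \<sigma> t = Max ((\<lambda>\<psi>. \<bar>X \<sigma> t - X \<psi> t\<bar>) ` {..<n})"

definition piece_partition ::
  "real \<Rightarrow> real \<Rightarrow> (real \<Rightarrow> nat) \<Rightarrow> nat \<Rightarrow> (nat \<Rightarrow> real) \<Rightarrow> bool" where
  "piece_partition a b T m u \<longleftrightarrow>
     u 0 = a \<and> u m = b \<and> (\<forall>k<m. u k < u (Suc k)) \<and>
     (\<forall>k<m. \<exists>\<sigma>. \<forall>s\<in>{u k<..<u (Suc k)}. T s = \<sigma>)"

text \<open>Trajectoid: a map from [tt 0, tt tau] to the entities, with finitely many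
  pieces, such that whenever it switches entity at time t, the entities involved are
  eps-connected at time t (stated as: every entity taken near t is eps-connected at
  time t to the entity taken at t).\<close>
definition trajectoid ::
  "nat \<Rightarrow> (nat \<Rightarrow> real \<Rightarrow> real) \<Rightarrow> (nat \<Rightarrow> real) \<Rightarrow> nat \<Rightarrow> real \<Rightarrow> (real \<Rightarrow> nat) \<Rightarrow> bool" where
  "trajectoid n X tt tau eps T \<longleftrightarrow>
     (\<forall>s\<in>{tt 0..tt tau}. T s < n) \<and>
     (\<exists>m u. piece_partition (tt 0) (tt tau) T m u) \<and>
     (\<forall>t\<in>{tt 0..tt tau}.
        eventually (\<lambda>s. eps_connected n X eps t (T s) (T t)) (at t within {tt 0..tt tau}))"

definition traj_cost ::
  "nat \<Rightarrow> (nat \<Rightarrow> real \<Rightarrow> real) \<Rightarrow> (nat \<Rightarrow> real) \<Rightarrow> nat \<Rightarrow> (real \<Rightarrow> nat) \<Rightarrow> real" where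
  "traj_cost n X tt tau T = integral {tt 0..tt tau} (\<lambda>s. Dmax n X (T s) s)"

definition central_trajectory ::
  "nat \<Rightarrow> (nat \<Rightarrow> real \<Rightarrow> real) \<Rightarrow> (nat \<Rightarrow> real) \<Rightarrow> nat \<Rightarrow> real \<Rightarrow> (real \<Rightarrow> nat) \<Rightarrow> bool" where
  "central_trajectory n X tt tau eps T \<longleftrightarrow>
     trajectoid n X tt tau eps T \<and>
     (\<forall>T'. trajectoid n X tt tau eps T' \<longrightarrow> traj_cost n X tt tau T \<le> traj_cost n X tt tau T')"

text \<open>Complexity: number of maximal pieces on which T is a single entity moving
  linearly = least number of open pieces of a partition with that property.\<close>
definition traj_complexity ::
  "(nat \<Rightarrow> real \<Rightarrow> real) \<Rightarrow> (nat \<Rightarrow> real) \<Rightarrow> nat \<Rightarrow> (real \<Rightarrow> nat) \<Rightarrow> nat" where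
  "traj_complexity X tt tau T =
     (LEAST m. \<exists>u. piece_partition (tt 0) (tt tau) T m u \<and>
        (\<forall>k<m. \<exists>a b. \<forall>s\<in>{u k<..<u (Suc k)}. X (T s) s = a * s + b))"

end

theory Submission
  imports Defs
begin

lemma pp_mono:
  assumes inc: "\<forall>k<m. u k < (u (Suc k)::real)" and "i < j" "j \<le> m"
  shows "u i < u j"
  using assms(2,3)
proof (induction j)
  case 0 then show ?case by simp
next
  case (Suc j)
  show ?case
  proof (cases "i = j")
    case True then show ?thesis using inc Suc by auto
  next
    case False
    then have "u i < u j" using Suc by auto
    also have "u j < u (Suc j)" using inc Suc by auto
    finally show ?thesis .
  qed
qed

lemma pp_mono_le:
  assumes inc: "\<forall>k<m. u k < (u (Suc k)::real)" and "i \<le> j" "j \<le> m"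
  shows "u i \<le> u j"
  using pp_mono[OF inc, of i j] assms by (cases "i = j") auto

lemma pp_mono_iff:
  assumes inc: "\<forall>k<m. u k < (u (Suc k)::real)" and "i \<le> m" "j \<le> m"
  shows "u i < u j \<longleftrightarrow> i < j"
  using pp_mono[OF inc, of i j] pp_mono[OF inc, of j i] assms
  by (metis less_asym linorder_neqE_nat order_less_irrefl)

lemma pp_locate:
  assumes inc: "\<forall>k<m. u k < (u (Suc k)::real)"
  shows "u 0 \<le> x \<Longrightarrow> x \<le> u m \<Longrightarrow> x \<notin> u ` {..m} \<Longrightarrow> \<exists>k<m. u k < x \<and> x < u (Suc k)"
  using inc
proof (induction m)
  case 0 then show ?case by auto
next
  case (Suc m)
  show ?case
  proof (cases "x \<le> u m")
    case True
    have "\<forall>k<m. u k < u (Suc k)" "x \<notin> u ` {..m}" using Suc.prems by auto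
    then obtain k where "k<m" "u k < x \<and> x < u (Suc k)" using Suc.IH Suc.prems True by auto
    then show ?thesis using less_SucI by blast
  next
    case False
    then show ?thesis using Suc.prems by (intro exI[of _ m]) auto
  qed
qed

lemma pp_sub:
  assumes inc: "\<forall>k<m. u k < (u (Suc k)::real)" and ab: "a < b" "u 0 \<le> a" "b \<le> u m"
    and dis: "{a<..<b} \<inter> u ` {..m} = {}"
  shows "\<exists>k<m. u k \<le> a \<and> b \<le> u (Suc k)"
proof -
  define z where "z = (a+b)/2"
  have z: "a < z" "z < b" using ab by (auto simp: z_def)
  have "z \<notin> u ` {..m}" using dis z by auto
  then obtain k where k: "k<m" "u k < z" "z < u (Suc k)"
    using pp_locate[OF inc, of z] z ab by auto
  have "u k \<le> a"
  proof (rule ccontr)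
    assume "\<not> u k \<le> a"
    then have "u k \<in> {a<..<b} \<inter> u ` {..m}" using k z by auto
    then show False using dis by auto
  qed
  moreover have "b \<le> u (Suc k)"
  proof (rule ccontr)
    assume "\<not> b \<le> u (Suc k)"
    then have "u (Suc k) \<in> {a<..<b} \<inter> u ` {..m}" using k z by auto
    then show False using dis by auto
  qed
  ultimately show ?thesis using k by auto
qed

lemma sorted_nth_less_iff:
  assumes "sorted_wrt (<) (L::real list)" "i < length L" "j < length L"
  shows "L!i < L!j \<longleftrightarrow> i < j"
  using sorted_wrt_nth_less[OF assms(1), of i j] sorted_wrt_nth_less[OF assms(1), of j i] assms
  by (metis less_asym linorder_neqE_nat order_less_irrefl)

lemma pp_of_finite:
  assumes lohi: "lo < (hi::real)" and fin: "finite S"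
    and Q: "\<And>a b. lo \<le> a \<Longrightarrow> a < b \<Longrightarrow> b \<le> hi \<Longrightarrow> {a<..<b} \<inter> S = {} \<Longrightarrow> Q a b"
  shows "\<exists>m u. u 0 = lo \<and> u m = hi \<and> (\<forall>k<m. u k < u (Suc k)) \<and> (\<forall>k<m. Q (u k) (u (Suc k)))"
proof -
  define A where "A = insert lo (insert hi (S \<inter> {lo..hi}))"
  define L where "L = sorted_list_of_set A"
  have finA: "finite A" using fin by (auto simp: A_def)
  have setL: "set L = A" using finA by (simp add: L_def)
  have sL: "sorted_wrt (<) L" by (simp add: L_def strict_sorted_list_of_set)
  have dL: "distinct L" by (simp add: L_def)
  have lenL: "length L = card A" using setL dL distinct_card by fastforce
  have Asub: "A \<subseteq> {lo..hi}" using lohi by (auto simp: A_def)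
  have cardA: "card A \<ge> 2"
  proof -
    have "{lo,hi} \<subseteq> A" by (auto simp: A_def)
    then have "card {lo,hi} \<le> card A" using finA card_mono by blast
    then show ?thesis using lohi by auto
  qed
  define m where "m = length L - 1"
  define u where "u = (\<lambda>k. L ! k)"
  have mlt: "m < length L" "Suc m = length L" using cardA lenL by (auto simp: m_def)
  have inc: "\<forall>k<m. u k < u (Suc k)"
  proof (intro allI impI)
    fix k assume "k < m"
    then show "u k < u (Suc k)" unfolding u_def using sorted_wrt_nth_less[OF sL, of k "Suc k"] mlt by auto
  qed
  have uin: "\<And>k. k \<le> m \<Longrightarrow> u k \<in> A" using mlt setL by (auto simp: u_def)
  have u0: "u 0 = lo"
  proof -
    have "lo \<in> set L" using setL by (auto simp: A_def)
    then obtain j where j: "j < length L" "L!j = lo" by (auto simp: in_set_conv_nth)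
    show ?thesis
    proof (cases j)
      case 0 then show ?thesis using j by (simp add: u_def)
    next
      case (Suc j')
      then have "L!0 < L!j" using sorted_wrt_nth_less[OF sL, of 0 j] j by auto
      moreover have "L!0 \<in> A" using setL mlt by (metis nth_mem zero_less_Suc)
      ultimately show ?thesis using j Asub by auto
    qed
  qed
  have um: "u m = hi"
  proof -
    have "hi \<in> set L" using setL by (auto simp: A_def)
    then obtain j where j: "j < length L" "L!j = hi" by (auto simp: in_set_conv_nth)
    show ?thesis
    proof (cases "j = m")
      case True then show ?thesis using j by (simp add: u_def)
    next
      case False
      then have "j < m" using j mlt by auto
      then have "L!j < L!m" using sorted_wrt_nth_less[OF sL, of j m] j mlt by auto
      moreover have "L!m \<in> A" using setL mlt by (metis nth_mem)
      ultimately show ?thesis using j Asub by auto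
    qed
  qed
  have "\<forall>k<m. Q (u k) (u (Suc k))"
  proof (intro allI impI)
    fix k assume k: "k < m"
    have a1: "lo \<le> u k" using uin[of k] k Asub by auto
    have a2: "u (Suc k) \<le> hi" using uin[of "Suc k"] k Asub by auto
    have a3: "{u k<..<u (Suc k)} \<inter> S = {}"
    proof (rule ccontr)
      assume "{u k<..<u (Suc k)} \<inter> S \<noteq> {}"
      then obtain z where z: "u k < z" "z < u (Suc k)" "z \<in> S" by auto
      then have "z \<in> A" using a1 a2 by (auto simp: A_def)
      then obtain j where j: "j < length L" "L!j = z" using setL by (auto simp: in_set_conv_nth)
      have "k < j" using sorted_nth_less_iff[OF sL, of k j] z j k mlt by (auto simp: u_def)
      moreover have "j < Suc k" using sorted_nth_less_iff[OF sL, of j "Suc k"] z j k mlt by (auto simp: u_def)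
      ultimately show False by auto
    qed
    show "Q (u k) (u (Suc k))" using Q[OF a1 _ a2 a3] inc k by auto
  qed
  then show ?thesis using u0 um inc by blast
qed

lemma cont_pl:
  assumes inc: "strictly_increasing_times tt tau" and pl: "piecewise_linear_entities n X tt tau" and j: "j < n"
  shows "continuous_on {tt 0..tt tau} (X j)"
proof -
  have inc': "\<forall>k<tau. tt k < tt (Suc k)" using inc by (simp add: strictly_increasing_times_def)
  have "t' \<le> tau \<Longrightarrow> continuous_on {tt 0..tt t'} (X j)" for t'
  proof (induction t')
    case 0 then show ?case by simp
  next
    case (Suc t')
    then obtain a b where ab: "\<forall>s\<in>{tt t'..tt (Suc t')}. X j s = a * s + b"
      using pl j Suc.prems unfolding piecewise_linear_entities_def by (metis Suc_le_lessD)
    have c2: "continuous_on {tt t'..tt (Suc t')} (X j)"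
      by (rule continuous_on_eq[of _ "\<lambda>s. a * s + b"]) (auto intro!: continuous_intros simp: ab)
    have c1: "continuous_on {tt 0..tt t'} (X j)" using Suc by auto
    have le: "tt 0 \<le> tt t'" using pp_mono_le[OF inc', of 0 t'] Suc by auto
    have le2: "tt t' \<le> tt (Suc t')" using inc' Suc.prems by (metis Suc_le_lessD less_imp_le)
    have eq: "{tt 0..tt (Suc t')} = {tt 0..tt t'} \<union> {tt t'..tt (Suc t')}" using le le2 by auto
    show ?case unfolding eq by (rule continuous_on_closed_Un[OF closed_atLeastAtMost closed_atLeastAtMost c1 c2])
  qed
  then show ?thesis by simp
qed

lemma cont_Max_image:
  fixes f :: "nat \<Rightarrow> 'a::topological_space \<Rightarrow> real"
  assumes "\<And>j. j \<le> n' \<Longrightarrow> continuous_on S (f j)"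
  shows "continuous_on S (\<lambda>s. Max ((\<lambda>j. f j s) ` {..<Suc n'}))"
  using assms
proof (induction n')
  case 0 then show ?case by (simp add: lessThan_Suc)
next
  case (Suc n')
  have eq: "(\<lambda>s. Max ((\<lambda>j. f j s) ` {..<Suc (Suc n')})) = (\<lambda>s. max (f (Suc n') s) (Max ((\<lambda>j. f j s) ` {..<Suc n'})))"
    by (rule ext) (simp only: lessThan_Suc[of "Suc n'"] image_insert, rule Max_insert, auto)
  show ?case unfolding eq by (rule continuous_on_max) (use Suc in auto)
qed

lemma cont_Dmax:
  assumes "\<And>j. j < n \<Longrightarrow> continuous_on S (X j)" "\<sigma> < n"
  shows "continuous_on S (\<lambda>s. Dmax n X \<sigma> s)"
proof -
  obtain n' where n': "n = Suc n'" using assms(2) by (cases n) auto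
  show ?thesis unfolding Dmax_def n'
    by (rule cont_Max_image) (use assms n' in \<open>auto intro!: continuous_intros\<close>)
qed

lemma traj_simple:
  assumes big: "\<forall>a<n. \<forall>b<n. \<forall>t\<in>{tt 0..tt tau}. \<bar>X a t - X b t\<bar> \<le> eps"
  shows "trajectoid n X tt tau eps T \<longleftrightarrow>
     (\<forall>s\<in>{tt 0..tt tau}. T s < n) \<and> (\<exists>m u. piece_partition (tt 0) (tt tau) T m u)"
proof -
  have "(\<forall>s\<in>{tt 0..tt tau}. T s < n) \<Longrightarrow> t\<in>{tt 0..tt tau} \<Longrightarrow>
      eventually (\<lambda>s. eps_connected n X eps t (T s) (T t)) (at t within {tt 0..tt tau})" for t
  proof -
    assume vals: "\<forall>s\<in>{tt 0..tt tau}. T s < n" and t: "t\<in>{tt 0..tt tau}"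
    have "eventually (\<lambda>s. s \<in> {tt 0..tt tau}) (at t within {tt 0..tt tau})"
      unfolding eventually_at_filter by simp
    then show ?thesis
    proof (rule eventually_mono)
      fix s assume s: "s \<in> {tt 0..tt tau}"
      have "(\<lambda>a b. a < n \<and> b < n \<and> \<bar>X a t - X b t\<bar> \<le> eps) (T s) (T t)"
        using vals s t big by auto
      then show "eps_connected n X eps t (T s) (T t)"
        unfolding eps_connected_def using vals s t by auto
    qed
  qed
  then show ?thesis unfolding trajectoid_def by blast
qed

lemma pp_props:
  assumes "piece_partition lo hi T m u"
  shows "u 0 = lo" "u m = hi" "\<forall>k<m. u k < u (Suc k)" "\<forall>k<m. \<exists>\<sigma>. \<forall>s\<in>{u k<..<u (Suc k)}. T s = \<sigma>"
  using assms by (auto simp: piece_partition_def)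

lemma integrable_traj:
  assumes cont: "\<And>\<sigma>. \<sigma> < n \<Longrightarrow> continuous_on {lo..hi} (\<lambda>s. Dmax n X \<sigma> s)"
    and vals: "\<forall>s\<in>{lo..hi}. T s < n" and pp: "piece_partition lo hi T m u"
  shows "(\<lambda>s. Dmax n X (T s) s) integrable_on {lo..hi}"
proof -
  note P = pp_props[OF pp]
  have "k \<le> m \<Longrightarrow> (\<lambda>s. Dmax n X (T s) s) integrable_on {u 0..u k}" for k
  proof (induction k)
    case 0 then show ?case using integrable_on_refl[of _ "u 0"] by simp
  next
    case (Suc k)
    have km: "k < m" using Suc by auto
    obtain \<sigma> where \<sigma>: "\<forall>s\<in>{u k<..<u (Suc k)}. T s = \<sigma>" using P(4) km by auto
    have lo: "lo \<le> u k" using pp_mono_le[OF P(3), of 0 k] km P(1) by auto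
    have hi: "u (Suc k) \<le> hi" using pp_mono_le[OF P(3), of "Suc k" m] km P(2) by auto
    have ukk: "u k < u (Suc k)" using P(3) km by auto
    have "\<sigma> < n"
    proof -
      define z where "z = (u k + u (Suc k))/2"
      have z: "z \<in> {u k<..<u (Suc k)}" using ukk by (auto simp: z_def)
      then have "z \<in> {lo..hi}" using lo hi by auto
      then have "T z < n" using vals by auto
      moreover have "T z = \<sigma>" using \<sigma> z by auto
      ultimately show ?thesis by simp
    qed
    then have ci: "(\<lambda>s. Dmax n X \<sigma> s) integrable_on {u k..u (Suc k)}"
      using cont[of \<sigma>] lo hi by (intro integrable_continuous_real) (auto elim: continuous_on_subset)
    have i2: "(\<lambda>s. Dmax n X (T s) s) integrable_on {u k..u (Suc k)}"
      by (rule integrable_spike_finite[of "{u k, u (Suc k)}" _ _ "\<lambda>s. Dmax n X \<sigma> s"]) (use ci \<sigma> in auto)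
    have i1: "(\<lambda>s. Dmax n X (T s) s) integrable_on {u 0..u k}" using Suc km by auto
    have "u 0 \<le> u k" using pp_mono_le[OF P(3), of 0 k] km by auto
    then show ?case using Henstock_Kurzweil_Integration.integrable_combine[OF _ _ i1 i2] ukk by auto
  qed
  from this[of m] show ?thesis using P by simp
qed

definition hc :: "(nat \<Rightarrow> real \<Rightarrow> real) \<Rightarrow> nat \<Rightarrow> nat \<Rightarrow> nat \<Rightarrow> nat \<Rightarrow> real \<Rightarrow> real" where
  "hc X a b c d s = X a s + X b s - X c s - X d s"

definition Zset :: "(nat \<Rightarrow> real) \<Rightarrow> (real \<Rightarrow> real) \<Rightarrow> nat \<Rightarrow> real set" where
  "Zset tt f i = {s \<in> {tt i..tt (Suc i)}. f s = 0 \<and> \<not> (\<forall>s'\<in>{tt i..tt (Suc i)}. f s' = 0)}"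

lemma finite_Zset:
  assumes lin: "\<forall>s\<in>{tt i..tt (Suc i)}. f s = \<alpha> * s + \<beta>"
  shows "finite (Zset tt f i)"
proof (cases "Zset tt f i = {}")
  case True then show ?thesis by simp
next
  case False
  then obtain s1 where s1: "s1 \<in> Zset tt f i" by auto
  have "Zset tt f i \<subseteq> {s1}"
  proof
    fix s2 assume s2: "s2 \<in> Zset tt f i"
    show "s2 \<in> {s1}"
    proof (rule ccontr)
      assume ne: "s2 \<notin> {s1}"
      have e1: "\<alpha> * s1 + \<beta> = 0" "\<alpha> * s2 + \<beta> = 0" using s1 s2 lin by (auto simp: Zset_def)
      then have "\<alpha> * s1 = \<alpha> * s2" by linarith
      then have "\<alpha> = 0" using ne by auto
      then have "\<beta> = 0" using e1 by auto
      then have "\<forall>s'\<in>{tt i..tt (Suc i)}. f s' = 0" using lin \<open>\<alpha> = 0\<close> by auto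
      then show False using s1 by (auto simp: Zset_def)
    qed
  qed
  then show ?thesis using finite_subset by blast
qed

lemma lin_hc:
  assumes pl: "piecewise_linear_entities n X tt tau" and i: "i < tau"
    and abcd: "a < n" "b < n" "c < n" "d < n"
  shows "\<exists>\<alpha> \<beta>. \<forall>s\<in>{tt i..tt (Suc i)}. hc X a b c d s = \<alpha> * s + \<beta>"
proof -
  obtain a1 b1 where 1: "\<forall>s\<in>{tt i..tt (Suc i)}. X a s = a1 * s + b1" using pl i abcd unfolding piecewise_linear_entities_def by blast
  obtain a2 b2 where 2: "\<forall>s\<in>{tt i..tt (Suc i)}. X b s = a2 * s + b2" using pl i abcd unfolding piecewise_linear_entities_def by blast
  obtain a3 b3 where 3: "\<forall>s\<in>{tt i..tt (Suc i)}. X c s = a3 * s + b3" using pl i abcd unfolding piecewise_linear_entities_def by blast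
  obtain a4 b4 where 4: "\<forall>s\<in>{tt i..tt (Suc i)}. X d s = a4 * s + b4" using pl i abcd unfolding piecewise_linear_entities_def by blast
  show ?thesis
    by (rule exI[of _ "a1 + a2 - a3 - a4"], rule exI[of _ "b1 + b2 - b3 - b4"])
       (use 1 2 3 4 in \<open>auto simp: hc_def algebra_simps\<close>)
qed

lemma lin_sign:
  fixes f :: "real \<Rightarrow> real"
  assumes lin: "\<forall>x\<in>{p<..<q}. f x = \<alpha> * x + \<beta>" and nz: "\<forall>x\<in>{p<..<q}. f x \<noteq> 0"
    and s: "s \<in> {p<..<q}" and s': "s' \<in> {p<..<q}"
  shows "f s > 0 \<longleftrightarrow> f s' > 0"
proof -
  have key: "False" if x: "x \<in> {p<..<q}" and y: "y \<in> {p<..<q}" and xy: "x \<le> y"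
      and sg: "(f x > 0 \<and> f y < 0) \<or> (f x < 0 \<and> f y > 0)" for x y
  proof -
    have cont: "continuous_on {x..y} (\<lambda>z. \<alpha> * z + \<beta>)" by (intro continuous_intros)
    have sub: "{x..y} \<subseteq> {p<..<q}" using x y by auto
    have "\<exists>z\<ge>x. z \<le> y \<and> \<alpha> * z + \<beta> = 0"
    proof (cases "f x > 0")
      case True
      then have "\<alpha> * y + \<beta> \<le> 0" "0 \<le> \<alpha> * x + \<beta>" using sg lin x y by auto
      then show ?thesis using IVT2'[of "\<lambda>z. \<alpha> * z + \<beta>", OF _ _ xy cont] by auto
    next
      case False
      then have "\<alpha> * x + \<beta> \<le> 0" "0 \<le> \<alpha> * y + \<beta>" using sg lin x y by auto
      then show ?thesis using IVT'[of "\<lambda>z. \<alpha> * z + \<beta>", OF _ _ xy cont] by auto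
    qed
    then obtain z where "z \<in> {x..y}" "\<alpha> * z + \<beta> = 0" by auto
    then show False using sub lin nz by force
  qed
  have "f s \<noteq> 0" "f s' \<noteq> 0" using nz s s' by auto
  then show ?thesis
    using key[OF s s'] key[OF s' s] by (cases "s \<le> s'") (auto simp: not_le linorder_neq_iff)
qed

lemma sign_prod:
  fixes u v u' v' :: real
  assumes "u > 0 \<longleftrightarrow> u' > 0" "u < 0 \<longleftrightarrow> u' < 0" "v > 0 \<longleftrightarrow> v' > 0" "v < 0 \<longleftrightarrow> v' < 0"
  shows "u * v \<le> 0 \<longleftrightarrow> u' * v' \<le> 0"
  using assms unfolding mult_le_0_iff by (meson linorder_not_le order.order_iff_strict)

lemma abs_le_prod:
  fixes a b c d :: real
  shows "\<bar>a - b\<bar> \<le> \<bar>c - d\<bar> \<longleftrightarrow> (a + d - b - c) * (a + c - b - d) \<le> 0"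
proof -
  have "\<bar>a - b\<bar> \<le> \<bar>c - d\<bar> \<longleftrightarrow> (a - b)^2 \<le> (c - d)^2" by (rule abs_le_square_iff)
  also have "\<dots> \<longleftrightarrow> (a + d - b - c) * (a + c - b - d) \<le> 0"
    by (simp add: power2_eq_square algebra_simps)
  finally show ?thesis .
qed

lemma Max_le_Max_iff:
  fixes A B :: "real set"
  assumes "finite A" "A \<noteq> {}" "finite B" "B \<noteq> {}"
  shows "Max A \<le> Max B \<longleftrightarrow> (\<forall>a\<in>A. \<exists>b\<in>B. a \<le> b)"
proof
  assume h: "Max A \<le> Max B"
  show "\<forall>a\<in>A. \<exists>b\<in>B. a \<le> b"
  proof
    fix a assume "a \<in> A"
    then have "a \<le> Max B" using h assms by (meson Max_ge order_trans)
    moreover have "Max B \<in> B" using assms by simp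
    ultimately show "\<exists>b\<in>B. a \<le> b" by blast
  qed
next
  assume h: "\<forall>a\<in>A. \<exists>b\<in>B. a \<le> b"
  have "Max A \<in> A" using assms by simp
  then obtain b where "b \<in> B" "Max A \<le> b" using h by blast
  then show "Max A \<le> Max B" using assms by (meson Max_ge order_trans)
qed

lemma Dmax_le_iff:
  assumes "n > 0"
  shows "Dmax n X \<sigma> s \<le> Dmax n X \<psi> s \<longleftrightarrow>
    (\<forall>\<rho><n. \<exists>\<rho>'<n. \<bar>X \<sigma> s - X \<rho> s\<bar> \<le> \<bar>X \<psi> s - X \<rho>' s\<bar>)"
  using assms unfolding Dmax_def by (subst Max_le_Max_iff) auto

definition Tstar :: "nat \<Rightarrow> (nat \<Rightarrow> real \<Rightarrow> real) \<Rightarrow> real \<Rightarrow> nat" where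
  "Tstar n X s = (LEAST \<sigma>. \<sigma> < n \<and> (\<forall>\<psi><n. Dmax n X \<sigma> s \<le> Dmax n X \<psi> s))"

lemma Tstar_prop:
  assumes "n > 0"
  shows "Tstar n X s < n \<and> (\<forall>\<psi><n. Dmax n X (Tstar n X s) s \<le> Dmax n X \<psi> s)"
proof -
  define V where "V = (\<lambda>\<sigma>. Dmax n X \<sigma> s) ` {..<n}"
  have "finite V" "V \<noteq> {}" using assms by (auto simp: V_def)
  then have "Min V \<in> V" by auto
  then obtain \<sigma>0 where \<sigma>0: "\<sigma>0 < n" "Dmax n X \<sigma>0 s = Min V" by (auto simp: V_def)
  have "\<forall>\<psi><n. Dmax n X \<sigma>0 s \<le> Dmax n X \<psi> s" using \<sigma>0 \<open>finite V\<close> by (auto simp: V_def)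
  then have "\<exists>\<sigma>. \<sigma> < n \<and> (\<forall>\<psi><n. Dmax n X \<sigma> s \<le> Dmax n X \<psi> s)" using \<sigma>0 by auto
  then show ?thesis unfolding Tstar_def by (rule LeastI_ex)
qed

lemma exists_central:
  assumes inc: "strictly_increasing_times tt tau" and pl: "piecewise_linear_entities n X tt tau"
    and big: "\<forall>a<n. \<forall>b<n. \<forall>t\<in>{tt 0..tt tau}. \<bar>X a t - X b t\<bar> \<le> eps"
    and n: "n > 0" and tau: "tau > 0"
  shows "central_trajectory n X tt tau eps (Tstar n X)"
proof -
  have inc': "\<forall>k<tau. tt k < tt (Suc k)" using inc by (simp add: strictly_increasing_times_def)
  have lohi: "tt 0 < tt tau" using pp_mono[OF inc', of 0 tau] tau by auto
  have contD: "\<And>\<sigma>. \<sigma> < n \<Longrightarrow> continuous_on {tt 0..tt tau} (\<lambda>s. Dmax n X \<sigma> s)"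
    using cont_pl[OF inc pl] by (intro cont_Dmax) auto
  define E where "E = tt ` {..tau} \<union> (\<Union>a<n. \<Union>b<n. \<Union>c<n. \<Union>d<n. \<Union>i<tau. Zset tt (hc X a b c d) i)"
  have finZ: "finite (Zset tt (hc X a b c d) i)" if H: "a<n" "b<n" "c<n" "d<n" "i<tau" for a b c d i
  proof -
    obtain \<alpha> \<beta> where "\<forall>s\<in>{tt i..tt (Suc i)}. hc X a b c d s = \<alpha> * s + \<beta>"
      using lin_hc[OF pl H(5) H(1-4)] by blast
    then show ?thesis by (rule finite_Zset)
  qed
  have finE: "finite E" unfolding E_def using finZ by (auto intro!: finite_UN_I)
  have const: "\<exists>\<sigma>. \<forall>s\<in>{p<..<q}. Tstar n X s = \<sigma>"
    if pq: "tt 0 \<le> p" "p < q" "q \<le> tt tau" "{p<..<q} \<inter> E = {}" for p q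
  proof -
    have "{p<..<q} \<inter> tt ` {..tau} = {}" using pq(4) by (auto simp: E_def)
    then obtain i where i: "i < tau" "tt i \<le> p" "q \<le> tt (Suc i)"
      using pp_sub[OF inc' pq(2) pq(1) pq(3)] by auto
    have sgn: "(hc X a b c d s > 0 \<longleftrightarrow> hc X a b c d s' > 0) \<and> (hc X a b c d s < 0 \<longleftrightarrow> hc X a b c d s' < 0)"
      if s: "s \<in> {p<..<q}" and s': "s' \<in> {p<..<q}" and abcd: "a<n" "b<n" "c<n" "d<n" for s s' a b c d
    proof -
      obtain \<alpha> \<beta> where lin: "\<forall>s\<in>{tt i..tt (Suc i)}. hc X a b c d s = \<alpha> * s + \<beta>"
        using lin_hc[OF pl i(1) abcd] by blast
      show ?thesis
      proof (cases "\<forall>s'\<in>{tt i..tt (Suc i)}. hc X a b c d s' = 0")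
        case True
        then show ?thesis using s s' i by auto
      next
        case False
        have nz: "\<forall>x\<in>{p<..<q}. hc X a b c d x \<noteq> 0"
        proof
          fix x assume x: "x \<in> {p<..<q}"
          show "hc X a b c d x \<noteq> 0"
          proof
            assume "hc X a b c d x = 0"
            then have "x \<in> Zset tt (hc X a b c d) i" using False x i by (auto simp: Zset_def)
            then have "x \<in> E" using abcd i unfolding E_def by blast
            then show False using pq(4) x by auto
          qed
        qed
        have lin2: "\<forall>x\<in>{p<..<q}. hc X a b c d x = \<alpha> * x + \<beta>" using lin i by auto
        have "hc X a b c d s > 0 \<longleftrightarrow> hc X a b c d s' > 0" by (rule lin_sign[OF lin2 nz s s'])
        moreover have "hc X a b c d s \<noteq> 0" "hc X a b c d s' \<noteq> 0" using nz s s' by auto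
        ultimately show ?thesis by linarith
      qed
    qed
    have pred: "Dmax n X \<sigma> s \<le> Dmax n X \<psi> s \<longleftrightarrow> Dmax n X \<sigma> s' \<le> Dmax n X \<psi> s'"
      if s: "s \<in> {p<..<q}" and s': "s' \<in> {p<..<q}" and \<sigma>: "\<sigma> < n" and \<psi>: "\<psi> < n" for s s' \<sigma> \<psi>
    proof -
      have "\<bar>X \<sigma> s - X \<rho> s\<bar> \<le> \<bar>X \<psi> s - X \<rho>' s\<bar> \<longleftrightarrow> \<bar>X \<sigma> s' - X \<rho> s'\<bar> \<le> \<bar>X \<psi> s' - X \<rho>' s'\<bar>"
        if "\<rho> < n" "\<rho>' < n" for \<rho> \<rho>'
      proof -
        have A: "\<bar>X \<sigma> t - X \<rho> t\<bar> \<le> \<bar>X \<psi> t - X \<rho>' t\<bar> \<longleftrightarrow> hc X \<sigma> \<rho>' \<rho> \<psi> t * hc X \<sigma> \<psi> \<rho> \<rho>' t \<le> 0" for t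
          unfolding hc_def by (rule abs_le_prod)
        show ?thesis unfolding A
          by (rule sign_prod) (use sgn[OF s s'] \<sigma> \<psi> that in blast)+
      qed
      note eq = this
      show ?thesis unfolding Dmax_le_iff[OF n] using eq by blast
    qed
    define z where "z = (p + q) / 2"
    have z: "z \<in> {p<..<q}" using pq by (auto simp: z_def)
    have "Tstar n X s = Tstar n X z" if s: "s \<in> {p<..<q}" for s
    proof -
      have "(\<lambda>\<sigma>. \<sigma> < n \<and> (\<forall>\<psi><n. Dmax n X \<sigma> s \<le> Dmax n X \<psi> s)) =
            (\<lambda>\<sigma>. \<sigma> < n \<and> (\<forall>\<psi><n. Dmax n X \<sigma> z \<le> Dmax n X \<psi> z))"
        using pred[OF s z] by auto
      then show ?thesis unfolding Tstar_def by simp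
    qed
    then show ?thesis by blast
  qed
  have vals: "\<forall>s\<in>{tt 0..tt tau}. Tstar n X s < n" using Tstar_prop[OF n] by auto
  obtain m u where "u 0 = tt 0" "u m = tt tau" "\<forall>k<m. u k < u (Suc k)"
      "\<forall>k<m. \<exists>\<sigma>. \<forall>s\<in>{u k<..<u (Suc k)}. Tstar n X s = \<sigma>"
    using pp_of_finite[OF lohi finE, of "\<lambda>p q. \<exists>\<sigma>. \<forall>s\<in>{p<..<q}. Tstar n X s = \<sigma>"] const by blast
  then have pp: "piece_partition (tt 0) (tt tau) (Tstar n X) m u" by (simp add: piece_partition_def)
  have traj: "trajectoid n X tt tau eps (Tstar n X)"
    using traj_simple[OF big] vals pp by blast
  have "traj_cost n X tt tau (Tstar n X) \<le> traj_cost n X tt tau T'" if T': "trajectoid n X tt tau eps T'" for T'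
  proof -
    obtain m' u' where pp': "piece_partition (tt 0) (tt tau) T' m' u'" and vals': "\<forall>s\<in>{tt 0..tt tau}. T' s < n"
      using T' traj_simple[OF big] by blast
    have i1: "(\<lambda>s. Dmax n X (Tstar n X s) s) integrable_on {tt 0..tt tau}"
      by (rule integrable_traj[OF contD vals pp])
    have i2: "(\<lambda>s. Dmax n X (T' s) s) integrable_on {tt 0..tt tau}"
      by (rule integrable_traj[OF contD vals' pp'])
    show ?thesis unfolding traj_cost_def
      by (rule integral_le[OF i1 i2]) (use Tstar_prop[OF n] vals' in auto)
  qed
  then show ?thesis using traj by (simp add: central_trajectory_def)
qed

lemma integral_pos_cont:
  fixes g :: "real \<Rightarrow> real"
  assumes ab: "a < b" and cont: "continuous_on {a..b} g" and pos: "\<forall>s\<in>{a..b}. g s > 0"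
  shows "integral {a..b} g > 0"
proof -
  obtain x0 where x0: "x0 \<in> {a..b}" "\<forall>y\<in>{a..b}. g x0 \<le> g y"
    using continuous_attains_inf[OF compact_Icc _ cont] ab by auto
  define \<mu> where "\<mu> = g x0"
  have mu: "\<mu> > 0" using pos x0 by (auto simp: \<mu>_def)
  have "integral {a..b} (\<lambda>s. \<mu>) \<le> integral {a..b} g"
    by (rule integral_le) (use x0 cont in \<open>auto simp: \<mu>_def intro: integrable_continuous_real\<close>)
  moreover have "integral {a..b} (\<lambda>s. \<mu>) = (b - a) * \<mu>"
    using ab by (simp add: content_real)
  moreover have "(b - a) * \<mu> > 0" using ab mu by simp
  ultimately show ?thesis by linarith
qed

lemma local_opt:
  assumes inc: "strictly_increasing_times tt tau" and pl: "piecewise_linear_entities n X tt tau"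
    and big: "\<forall>a<n. \<forall>b<n. \<forall>t\<in>{tt 0..tt tau}. \<bar>X a t - X b t\<bar> \<le> eps"
    and n: "n > 0" and tau: "tau > 0"
    and central: "central_trajectory n X tt tau eps T"
    and pp: "piece_partition (tt 0) (tt tau) T m u"
    and t0: "tt 0 < t0" "t0 < tt tau" and \<sigma>0: "\<sigma>0 < n"
    and strict: "\<forall>\<psi><n. \<psi> \<noteq> \<sigma>0 \<longrightarrow> Dmax n X \<sigma>0 t0 < Dmax n X \<psi> t0"
  shows "\<exists>\<delta>>0. \<forall>k<m. \<forall>y. u k < y \<longrightarrow> y < u (Suc k) \<longrightarrow> \<bar>y - t0\<bar> < \<delta> \<longrightarrow> T y = \<sigma>0"
proof -
  define lo where "lo = tt 0"
  define hi where "hi = tt tau"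
  note P = pp_props[OF pp]
  have contD: "\<And>\<sigma>. \<sigma> < n \<Longrightarrow> continuous_on {lo..hi} (\<lambda>s. Dmax n X \<sigma> s)"
    using cont_pl[OF inc pl] unfolding lo_def hi_def by (intro cont_Dmax) auto
  have int: "t0 \<in> interior {lo..hi}" using t0 by (simp add: lo_def hi_def)
  have "\<forall>\<psi>\<in>{..<n}-{\<sigma>0}. eventually (\<lambda>s. 0 < Dmax n X \<psi> s - Dmax n X \<sigma>0 s) (at t0)"
  proof
    fix \<psi> assume \<psi>: "\<psi> \<in> {..<n}-{\<sigma>0}"
    have c: "continuous_on {lo..hi} (\<lambda>s. Dmax n X \<psi> s - Dmax n X \<sigma>0 s)"
      using contD \<psi> \<sigma>0 by (intro continuous_intros) auto
    have "isCont (\<lambda>s. Dmax n X \<psi> s - Dmax n X \<sigma>0 s) t0" by (rule continuous_on_interior[OF c int])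
    then have "((\<lambda>s. Dmax n X \<psi> s - Dmax n X \<sigma>0 s) \<longlongrightarrow> Dmax n X \<psi> t0 - Dmax n X \<sigma>0 t0) (at t0)"
      by (simp add: isCont_def)
    moreover have "0 < Dmax n X \<psi> t0 - Dmax n X \<sigma>0 t0" using strict \<psi> by auto
    ultimately show "eventually (\<lambda>s. 0 < Dmax n X \<psi> s - Dmax n X \<sigma>0 s) (at t0)"
      by (rule order_tendstoD)
  qed
  then have "eventually (\<lambda>s. \<forall>\<psi>\<in>{..<n}-{\<sigma>0}. 0 < Dmax n X \<psi> s - Dmax n X \<sigma>0 s) (at t0)"
    by (intro eventually_ball_finite) auto
  then obtain d where d: "d > 0" "\<forall>s. s \<noteq> t0 \<and> dist s t0 < d \<longrightarrow> (\<forall>\<psi>\<in>{..<n}-{\<sigma>0}. 0 < Dmax n X \<psi> s - Dmax n X \<sigma>0 s)"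
    unfolding eventually_at by auto
  define \<delta> where "\<delta> = min d (min (t0 - lo) (hi - t0)) / 2"
  have \<delta>: "\<delta> > 0" using d t0 by (auto simp: \<delta>_def lo_def hi_def)
  have strictN: "\<forall>\<psi><n. \<psi> \<noteq> \<sigma>0 \<longrightarrow> Dmax n X \<sigma>0 s < Dmax n X \<psi> s" if s: "\<bar>s - t0\<bar> \<le> \<delta>" for s
  proof (cases "s = t0")
    case True then show ?thesis using strict by simp
  next
    case False
    have "dist s t0 < d" using s d \<delta> by (auto simp: \<delta>_def dist_real_def)
    then show ?thesis using d False by force
  qed
  have inside: "lo < s \<and> s < hi" if "\<bar>s - t0\<bar> \<le> \<delta>" for s
  proof -
    have "\<delta> \<le> (t0 - lo)/2" "\<delta> \<le> (hi - t0)/2" unfolding \<delta>_def by auto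
    then show ?thesis using that t0[folded lo_def hi_def] by (auto simp: abs_le_iff)
  qed
  have "\<forall>k<m. \<forall>y. u k < y \<longrightarrow> y < u (Suc k) \<longrightarrow> \<bar>y - t0\<bar> < \<delta> \<longrightarrow> T y = \<sigma>0"
  proof (intro allI impI)
    fix k y assume k: "k < m" and y: "u k < y" "y < u (Suc k)" "\<bar>y - t0\<bar> < \<delta>"
    show "T y = \<sigma>0"
    proof (rule ccontr)
      assume ne: "T y \<noteq> \<sigma>0"
      define \<sigma> where "\<sigma> = T y"
      obtain \<sigma>' where \<sigma>': "\<forall>s\<in>{u k<..<u (Suc k)}. T s = \<sigma>'" using P(4) k by auto
      have Tpc: "\<forall>s\<in>{u k<..<u (Suc k)}. T s = \<sigma>" using \<sigma>' y by (auto simp: \<sigma>_def)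
      have ylh: "lo < y \<and> y < hi" using inside y by auto
      have vals: "\<forall>s\<in>{lo..hi}. T s < n" using central traj_simple[OF big] 
        by (auto simp: central_trajectory_def lo_def hi_def)
      have \<sigma>n: "\<sigma> < n" using vals ylh by (auto simp: \<sigma>_def)
      define a where "a = max (u k) (t0 - \<delta>)"
      define b where "b = min (u (Suc k)) (t0 + \<delta>)"
      have ab: "a < y" "y < b" using y by (auto simp: a_def b_def abs_less_iff)
      have abI: "\<bar>s - t0\<bar> \<le> \<delta>" if "s \<in> {a..b}" for s using that by (auto simp: a_def b_def abs_le_iff)
      have abP: "{a<..<b} \<subseteq> {u k<..<u (Suc k)}" by (auto simp: a_def b_def)
      have abLH: "{a..b} \<subseteq> {lo..hi}" using inside abI by fastforce
      define T' where "T' = (\<lambda>s. if s \<in> {a<..<b} then \<sigma>0 else T s)"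
      have vals': "\<forall>s\<in>{lo..hi}. T' s < n" using vals \<sigma>0 by (auto simp: T'_def)
      have lohi: "lo < hi" using ylh by auto
      have finS: "finite (u ` {..m} \<union> {a, b})" by auto
      have "\<exists>m' u'. u' 0 = lo \<and> u' m' = hi \<and> (\<forall>k<m'. u' k < u' (Suc k)) \<and>
          (\<forall>k<m'. \<exists>\<sigma>. \<forall>s\<in>{u' k<..<u' (Suc k)}. T' s = \<sigma>)"
      proof (rule pp_of_finite[OF lohi finS])
        fix p q assume pq: "lo \<le> p" "p < q" "q \<le> hi" "{p<..<q} \<inter> (u ` {..m} \<union> {a, b}) = {}"
        obtain k' where k': "k' < m" "u k' \<le> p" "q \<le> u (Suc k')"
          using pp_sub[OF P(3) pq(2)] pq P(1,2) by (auto simp: lo_def hi_def)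
        obtain \<tau>0 where \<tau>0: "\<forall>s\<in>{u k'<..<u (Suc k')}. T s = \<tau>0" using P(4) k' by auto
        show "\<exists>\<sigma>. \<forall>s\<in>{p<..<q}. T' s = \<sigma>"
        proof (cases "{p<..<q} \<inter> {a<..<b} = {}")
          case True
          then show ?thesis using \<tau>0 k' by (intro exI[of _ \<tau>0]) (auto simp: T'_def)
        next
          case False
          then obtain w where w: "w \<in> {p<..<q}" "w \<in> {a<..<b}" by blast
          have "{p<..<q} \<subseteq> {a<..<b}"
          proof
            fix w' assume w': "w' \<in> {p<..<q}"
            have "a < w'"
            proof (rule ccontr)
              assume "\<not> a < w'"
              then have "a \<in> {p<..<q}" using w w' by auto
              then show False using pq(4) by auto
            qed
            moreover have "w' < b"
            proof (rule ccontr)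
              assume "\<not> w' < b"
              then have "b \<in> {p<..<q}" using w w' by auto
              then show False using pq(4) by auto
            qed
            ultimately show "w' \<in> {a<..<b}" by auto
          qed
          then show ?thesis by (intro exI[of _ \<sigma>0]) (auto simp: T'_def)
        qed
      qed
      then obtain m' u' where pp': "piece_partition lo hi T' m' u'" by (auto simp: piece_partition_def)
      have traj': "trajectoid n X tt tau eps T'"
        using traj_simple[OF big] vals' pp' by (auto simp: lo_def hi_def)
      have i1: "(\<lambda>s. Dmax n X (T s) s) integrable_on {lo..hi}"
        by (rule integrable_traj[OF contD vals pp[folded lo_def hi_def]])
      have i2: "(\<lambda>s. Dmax n X (T' s) s) integrable_on {lo..hi}"
        by (rule integrable_traj[OF contD vals' pp'])
      define g where "g = (\<lambda>s. Dmax n X \<sigma> s - Dmax n X \<sigma>0 s)"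
      have "integral {lo..hi} (\<lambda>s. Dmax n X (T s) s) - integral {lo..hi} (\<lambda>s. Dmax n X (T' s) s)
          = integral {lo..hi} (\<lambda>s. Dmax n X (T s) s - Dmax n X (T' s) s)"
        using integral_diff[OF i1 i2] by simp
      also have "\<dots> = integral {lo..hi} (\<lambda>s. if s \<in> {a..b} then g s else 0)"
      proof (rule integral_spike[of "{a,b}"])
        show "negligible {a,b}" by (rule negligible_finite) auto
        fix s assume s: "s \<in> {lo..hi} - {a,b}"
        show "(if s \<in> {a..b} then g s else 0) = Dmax n X (T s) s - Dmax n X (T' s) s"
        proof (cases "s \<in> {a<..<b}")
          case True
          then show ?thesis using Tpc abP by (auto simp: T'_def g_def)
        next
          case False
          then show ?thesis using s by (auto simp: T'_def)
        qed
      qed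
      also have "\<dots> = integral {a..b} g"
        using abLH by (subst integral_restrict_Int) (simp only: Int_absorb2 inf.absorb1)
      also have "\<dots> > 0"
      proof (rule integral_pos_cont)
        show "a < b" using ab by auto
        show "continuous_on {a..b} g" unfolding g_def
          by (intro continuous_intros continuous_on_subset[OF contD abLH] \<sigma>n \<sigma>0)
        show "\<forall>s\<in>{a..b}. 0 < g s" using strictN abI ne \<sigma>n by (auto simp: g_def \<sigma>_def)
      qed
      finally have "traj_cost n X tt tau T' < traj_cost n X tt tau T"
        by (simp add: traj_cost_def lo_def hi_def)
      moreover have "traj_cost n X tt tau T \<le> traj_cost n X tt tau T'"
        using central traj' by (simp add: central_trajectory_def)
      ultimately show False by simp
    qed
  qed
  then show ?thesis using \<delta> by blast
qed

lemma count_pieces: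
  fixes y :: "nat \<Rightarrow> real"
  assumes inc: "\<forall>k<m. u k < u (Suc k)" and u0: "u 0 = lo" and um: "u m = hi" and lohi: "lo < hi"
    and const: "\<forall>k<m. \<exists>\<sigma>. \<forall>s\<in>{u k<..<u (Suc k)}. T s = \<sigma>"
    and yin: "\<forall>q<Q. y q \<in> {lo..hi} \<and> y q \<notin> u ` {..m}"
    and ymono: "\<forall>q. Suc q < Q \<longrightarrow> y q < y (Suc q)"
    and ydiff: "\<forall>q. Suc q < Q \<longrightarrow> (T (y q) :: nat) \<noteq> T (y (Suc q))"
    and Q: "Q > 0"
  shows "Q \<le> m"
proof -
  have m0: "m \<noteq> 0" using u0 um lohi by (metis less_irrefl)
  have ymono2: "q1 < q2 \<Longrightarrow> q2 < Q \<Longrightarrow> y q1 < y q2" for q1 q2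
  proof (induction q2)
    case 0 then show ?case by simp
  next
    case (Suc q2)
    show ?case
    proof (cases "q1 = q2")
      case True then show ?thesis using ymono Suc by auto
    next
      case False
      then have "y q1 < y q2" using Suc by auto
      also have "y q2 < y (Suc q2)" using ymono Suc by auto
      finally show ?thesis .
    qed
  qed
  have ex: "\<exists>j. j \<le> m \<and> y q < u j \<and> u j < y (Suc q)" if q: "Suc q < Q" for q
  proof -
    have yq: "y q \<in> {lo..hi}" "y q \<notin> u ` {..m}" using yin q by auto
    obtain k where k: "k < m" "u k < y q" "y q < u (Suc k)"
      using pp_locate[OF inc, of "y q"] yq u0 um by auto
    have ys: "y (Suc q) \<in> {lo..hi}" "y (Suc q) \<notin> u ` {..m}" using yin q by auto
    have lt: "y q < y (Suc q)" using ymono q by auto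
    have "u (Suc k) < y (Suc q)"
    proof (rule ccontr)
      assume "\<not> u (Suc k) < y (Suc q)"
      moreover have "y (Suc q) \<noteq> u (Suc k)" using ys k by auto
      ultimately have "y (Suc q) < u (Suc k)" by auto
      then have "y (Suc q) \<in> {u k<..<u (Suc k)}" "y q \<in> {u k<..<u (Suc k)}" using k lt by auto
      then have "T (y q) = T (y (Suc q))" using const k by metis
      then show False using ydiff q by auto
    qed
    then show ?thesis using k by (intro exI[of _ "Suc k"]) auto
  qed
  define g where "g = (\<lambda>q. SOME j. j \<le> m \<and> y q < u j \<and> u j < y (Suc q))"
  have g: "g q \<le> m \<and> y q < u (g q) \<and> u (g q) < y (Suc q)" if "Suc q < Q" for q
    unfolding g_def using someI_ex[OF ex[OF that]] .
  have inj: "inj_on g {..<Q-1}"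
  proof (rule inj_onI)
    fix q1 q2 assume q1: "q1 \<in> {..<Q-1}" and q2: "q2 \<in> {..<Q-1}" and eq: "g q1 = g q2"
    show "q1 = q2"
    proof (rule ccontr)
      assume "q1 \<noteq> q2"
      then consider "q1 < q2" | "q2 < q1" by linarith
      then show False
      proof cases
        case 1
        have "q2 < Q" using q2 by auto
        have a: "u (g q1) < y (Suc q1)" using g q1 by auto
        have b: "y (Suc q1) \<le> y q2" using ymono2[of "Suc q1" q2] 1 \<open>q2 < Q\<close> by (cases "Suc q1 = q2") auto
        have c: "y q2 < u (g q2)" using g q2 by auto
        show False using a b c eq by simp
      next
        case 2
        have "q1 < Q" using q1 by auto
        have a: "u (g q2) < y (Suc q2)" using g q2 by auto
        have b: "y (Suc q2) \<le> y q1" using ymono2[of "Suc q2" q1] 2 \<open>q1 < Q\<close> by (cases "Suc q2 = q1") auto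
        have c: "y q1 < u (g q1)" using g q1 by auto
        show False using a b c eq by simp
      qed
    qed
  qed
  have img: "g ` {..<Q-1} \<subseteq> {1..<m}"
  proof
    fix j assume "j \<in> g ` {..<Q-1}"
    then obtain q where q: "q < Q - 1" "j = g q" by auto
    have gq: "g q \<le> m" "y q < u (g q)" "u (g q) < y (Suc q)" using g q by auto
    have qQ: "q < Q" "Suc q < Q" using q by auto
    have "lo \<le> y q" "y (Suc q) \<le> hi" using yin qQ by auto
    then have "u 0 < u (g q)" using gq u0 by auto
    then have "0 < g q" using pp_mono_iff[OF inc, of 0 "g q"] gq by auto
    moreover have "u (g q) < u m" using gq um \<open>y (Suc q) \<le> hi\<close> by auto
    then have "g q < m" using pp_mono_iff[OF inc, of "g q" m] gq by auto
    ultimately show "j \<in> {1..<m}" using q by auto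
  qed
  have "card {..<Q-1} \<le> card {1..<m}" by (rule card_inj_on_le[OF inj img]) auto
  then show ?thesis using m0 Q by auto
qed

lemma complexity_lb:
  assumes inc: "strictly_increasing_times tt tau" and pl: "piecewise_linear_entities n X tt tau"
    and big: "\<forall>a<n. \<forall>b<n. \<forall>t\<in>{tt 0..tt tau}. \<bar>X a t - X b t\<bar> \<le> eps"
    and n: "n > 0" and tau: "tau > 0"
    and central: "central_trajectory n X tt tau eps T"
    and Q: "Q > 0"
    and tin: "\<forall>q<Q. tt 0 < t q \<and> t q < tt tau"
    and sig: "\<forall>q<Q. \<sigma> q < n \<and> (\<forall>\<psi><n. \<psi> \<noteq> \<sigma> q \<longrightarrow> Dmax n X (\<sigma> q) (t q) < Dmax n X \<psi> (t q))"
    and gap: "gp > 0" "\<forall>q. Suc q < Q \<longrightarrow> t q + gp \<le> t (Suc q)"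
    and sdiff: "\<forall>q. Suc q < Q \<longrightarrow> \<sigma> q \<noteq> \<sigma> (Suc q)"
  shows "Q \<le> traj_complexity X tt tau T"
proof -
  define lo where "lo = tt 0"
  define hi where "hi = tt tau"
  have inc': "\<forall>k<tau. tt k < tt (Suc k)" using inc by (simp add: strictly_increasing_times_def)
  have lohi: "lo < hi" using pp_mono[OF inc', of 0 tau] tau by (auto simp: lo_def hi_def)
  have traj: "trajectoid n X tt tau eps T" using central by (simp add: central_trajectory_def)
  obtain m0 u0 where pp0: "piece_partition lo hi T m0 u0" and vals: "\<forall>s\<in>{lo..hi}. T s < n"
    using traj traj_simple[OF big] by (auto simp: lo_def hi_def)
  note P0 = pp_props[OF pp0]
  have "\<exists>m u. u 0 = lo \<and> u m = hi \<and> (\<forall>k<m. u k < u (Suc k)) \<and>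
      (\<forall>k<m. (\<exists>\<sigma>. \<forall>s\<in>{u k<..<u (Suc k)}. T s = \<sigma>) \<and>
         (\<exists>a b. \<forall>s\<in>{u k<..<u (Suc k)}. X (T s) s = a * s + b))"
  proof (rule pp_of_finite[OF lohi, of "u0 ` {..m0} \<union> tt ` {..tau}"])
    show "finite (u0 ` {..m0} \<union> tt ` {..tau})" by auto
    fix p q assume pq: "lo \<le> p" "p < q" "q \<le> hi" "{p<..<q} \<inter> (u0 ` {..m0} \<union> tt ` {..tau}) = {}"
    obtain k where k: "k < m0" "u0 k \<le> p" "q \<le> u0 (Suc k)"
      using pp_sub[OF P0(3) pq(2)] pq P0(1,2) by auto
    obtain \<sigma>' where \<sigma>': "\<forall>s\<in>{u0 k<..<u0 (Suc k)}. T s = \<sigma>'" using P0(4) k by auto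
    obtain i where i: "i < tau" "tt i \<le> p" "q \<le> tt (Suc i)"
      using pp_sub[OF inc' pq(2)] pq by (auto simp: lo_def hi_def)
    define z where "z = (p+q)/2"
    have z: "z \<in> {p<..<q}" using pq by (auto simp: z_def)
    have "T z < n" using vals z pq by auto
    then have \<sigma>n: "\<sigma>' < n" using \<sigma>' z k by auto
    obtain a b where ab: "\<forall>s\<in>{tt i..tt (Suc i)}. X \<sigma>' s = a * s + b"
      using pl \<sigma>n i unfolding piecewise_linear_entities_def by blast
    show "(\<exists>\<sigma>. \<forall>s\<in>{p<..<q}. T s = \<sigma>) \<and> (\<exists>a b. \<forall>s\<in>{p<..<q}. X (T s) s = a * s + b)"
      using \<sigma>' ab k i by (intro conjI exI[of _ \<sigma>'] exI[of _ a] exI[of _ b]) auto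
  qed
  then have ex: "\<exists>m u. piece_partition lo hi T m u \<and>
        (\<forall>k<m. \<exists>a b. \<forall>s\<in>{u k<..<u (Suc k)}. X (T s) s = a * s + b)"
    unfolding piece_partition_def by blast
  define M where "M = traj_complexity X tt tau T"
  obtain u where ppu: "piece_partition lo hi T M u"
    "\<forall>k<M. \<exists>a b. \<forall>s\<in>{u k<..<u (Suc k)}. X (T s) s = a * s + b"
    using LeastI_ex[OF ex] unfolding M_def traj_complexity_def lo_def hi_def by blast
  note P = pp_props[OF ppu(1)]
  have ychoice: "\<exists>yq. yq \<in> {lo..hi} \<and> yq \<notin> u ` {..M} \<and> \<bar>yq - t q\<bar> < gp/2 \<and> T yq = \<sigma> q" if q: "q < Q" for q
  proof -
    obtain \<delta> where \<delta>: "\<delta> > 0" "\<forall>k<M. \<forall>y. u k < y \<longrightarrow> y < u (Suc k) \<longrightarrow> \<bar>y - t q\<bar> < \<delta> \<longrightarrow> T y = \<sigma> q"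
      using local_opt[OF inc pl big n tau central ppu(1)[unfolded lo_def hi_def]] tin sig q by blast
    define r where "r = min (min \<delta> (gp/2)) (min (t q - lo) (hi - t q))"
    have r: "r > 0" using \<delta> gap tin q by (auto simp: r_def lo_def hi_def)
    have "infinite ({t q - r<..<t q + r} - u ` {..M})"
      by (rule Diff_infinite_finite) (use r in auto)
    then obtain yq where yq: "yq \<in> {t q - r<..<t q + r}" "yq \<notin> u ` {..M}"
      using infinite_imp_nonempty by blast
    have yb: "\<bar>yq - t q\<bar> < r" using yq by (auto simp: abs_less_iff)
    have ylh: "yq \<in> {lo..hi}" using yb by (auto simp: r_def abs_less_iff)
    obtain k where k: "k < M" "u k < yq" "yq < u (Suc k)"
      using pp_locate[OF P(3), of yq] ylh yq P(1,2) by auto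
    have "T yq = \<sigma> q" using \<delta>(2) k yb by (auto simp: r_def)
    then show ?thesis using yq ylh yb by (intro exI[of _ yq]) (auto simp: r_def)
  qed
  then obtain y where y: "\<forall>q<Q. y q \<in> {lo..hi} \<and> y q \<notin> u ` {..M} \<and> \<bar>y q - t q\<bar> < gp/2 \<and> T (y q) = \<sigma> q"
    by metis
  show ?thesis unfolding M_def[symmetric]
  proof (rule count_pieces[OF P(3) P(1) P(2) lohi P(4) _ _ _ Q])
    show "\<forall>q<Q. y q \<in> {lo..hi} \<and> y q \<notin> u ` {..M}" using y by auto
    show "\<forall>q. Suc q < Q \<longrightarrow> y q < y (Suc q)"
    proof (intro allI impI)
      fix q assume sq: "Suc q < Q"
      have "\<bar>y q - t q\<bar> < gp/2" "\<bar>y (Suc q) - t (Suc q)\<bar> < gp/2"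
        using y sq by auto
      then have "y q < t q + gp/2" "t (Suc q) - gp/2 < y (Suc q)" unfolding abs_less_iff by linarith+
      moreover have "t q + gp \<le> t (Suc q)" using gap sq by auto
      ultimately show "y q < y (Suc q)" by linarith
    qed
    show "\<forall>q. Suc q < Q \<longrightarrow> T (y q) \<noteq> T (y (Suc q))" using y sdiff by auto
  qed
qed

lemma Dmax_via_bounds:
  assumes b: "\<forall>j<n. Mn \<le> X j t \<and> X j t \<le> Mx" and ax: "\<exists>j<n. X j t = Mx" and an: "\<exists>j<n. X j t = Mn"
    and \<sigma>: "\<sigma> < n"
  shows "Dmax n X \<sigma> t = max (X \<sigma> t - Mn) (Mx - X \<sigma> t)"
proof -
  have fin: "finite ((\<lambda>\<psi>. \<bar>X \<sigma> t - X \<psi> t\<bar>) ` {..<n})" "(\<lambda>\<psi>. \<bar>X \<sigma> t - X \<psi> t\<bar>) ` {..<n} \<noteq> {}"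
    using \<sigma> by auto
  show ?thesis unfolding Dmax_def
  proof (rule antisym)
    show "Max ((\<lambda>\<psi>. \<bar>X \<sigma> t - X \<psi> t\<bar>) ` {..<n}) \<le> max (X \<sigma> t - Mn) (Mx - X \<sigma> t)"
      using fin b by (subst Max_le_iff) (auto simp: abs_le_iff)
    obtain j1 where j1: "j1 < n" "X j1 t = Mx" using ax by auto
    obtain j2 where j2: "j2 < n" "X j2 t = Mn" using an by auto
    have "\<bar>X \<sigma> t - X j2 t\<bar> \<le> Max ((\<lambda>\<psi>. \<bar>X \<sigma> t - X \<psi> t\<bar>) ` {..<n})"
      using fin j2 by (intro Max_ge) auto
    moreover have "\<bar>X \<sigma> t - X j1 t\<bar> \<le> Max ((\<lambda>\<psi>. \<bar>X \<sigma> t - X \<psi> t\<bar>) ` {..<n})"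
      using fin j1 by (intro Max_ge) auto
    moreover have "X \<sigma> t - Mn \<le> \<bar>X \<sigma> t - X j2 t\<bar>" "Mx - X \<sigma> t \<le> \<bar>X \<sigma> t - X j1 t\<bar>"
      using j1 j2 by auto
    ultimately show "max (X \<sigma> t - Mn) (Mx - X \<sigma> t) \<le> Max ((\<lambda>\<psi>. \<bar>X \<sigma> t - X \<psi> t\<bar>) ` {..<n})"
      by linarith
  qed
qed

lemma strict_mid:
  assumes b: "\<forall>j<n. Mn \<le> X j t \<and> X j t \<le> Mx" and ax: "\<exists>j<n. X j t = Mx" and an: "\<exists>j<n. X j t = Mn"
    and \<sigma>: "\<sigma> < n" and mid: "X \<sigma> t = (Mx + Mn)/2" and others: "\<forall>\<psi><n. \<psi> \<noteq> \<sigma> \<longrightarrow> X \<psi> t \<noteq> X \<sigma> t"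
  shows "\<forall>\<psi><n. \<psi> \<noteq> \<sigma> \<longrightarrow> Dmax n X \<sigma> t < Dmax n X \<psi> t"
proof (intro allI impI)
  fix \<psi> assume \<psi>: "\<psi> < n" "\<psi> \<noteq> \<sigma>"
  have ne: "X \<psi> t \<noteq> (Mx + Mn)/2" using others \<psi> mid by auto
  have e1: "max ((Mx + Mn)/2 - Mn) (Mx - (Mx + Mn)/2) = (Mx - Mn)/2" by (simp add: max_def field_simps)
  have e2: "(Mx - Mn)/2 < max (X \<psi> t - Mn) (Mx - X \<psi> t)"
  proof (cases "X \<psi> t < (Mx+Mn)/2")
    case True then show ?thesis by (simp add: less_max_iff_disj)
  next
    case False then have "X \<psi> t > (Mx+Mn)/2" using ne by auto
    then show ?thesis by (simp add: less_max_iff_disj)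
  qed
  show "Dmax n X \<sigma> t < Dmax n X \<psi> t"
    unfolding Dmax_via_bounds[where X=X and t=t and n=n and Mn=Mn and Mx=Mx, OF b ax an \<sigma>]
      Dmax_via_bounds[where X=X and t=t and n=n and Mn=Mn and Mx=Mx, OF b ax an \<psi>(1)] mid
    using e1 e2 by linarith
qed

definition psi :: "real \<Rightarrow> real \<Rightarrow> real" where
  "psi K t = (let i = \<lfloor>t / K\<rfloor> in if even i then t - of_int i * K else (of_int i + 1) * K - t)"

lemma psi_on:
  assumes K: "K > 0" and s: "real i * K \<le> s" "s \<le> (real i + 1) * K"
  shows "psi K s = (if even i then s - real i * K else (real i + 1) * K - s)"
proof (cases "s < (real i + 1) * K")
  case True
  have "\<lfloor>s / K\<rfloor> = int i"
    using K s True by (subst floor_eq_iff) (auto simp: field_simps)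
  then show ?thesis by (simp add: psi_def)
next
  case False
  then have se: "s = (real i + 1) * K" using s by auto
  have "\<lfloor>s / K\<rfloor> = int i + 1" using K se by simp
  then show ?thesis using se by (auto simp: psi_def algebra_simps)
qed

lemma psi_range:
  assumes K: "K > 0"
  shows "0 \<le> psi K t \<and> psi K t \<le> K"
proof -
  define i where "i = \<lfloor>t / K\<rfloor>"
  have "of_int i \<le> t / K" "t / K < of_int i + 1" unfolding i_def by linarith+
  then have "of_int i * K \<le> t" "t < (of_int i + 1) * K" using K by (auto simp: field_simps)
  then show ?thesis unfolding psi_def Let_def i_def[symmetric] by (auto simp: algebra_simps)
qed

definition Hk :: "nat \<Rightarrow> real" where "Hk k = 10 + 8 * (real k)^2"
definition pmid :: "nat \<Rightarrow> nat \<Rightarrow> real" where "pmid M r = -1 + (2 * real r + 1) / real M"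
definition posb :: "nat \<Rightarrow> nat \<Rightarrow> nat \<Rightarrow> real \<Rightarrow> real" where
  "posb k M j x = (if j \<le> k then 16 * real j * x + (Hk k - 8 * (real j)^2)
     else if j \<le> 2*k then - (8 * (2 * real (j-k-1) + 1)) * x + (8 * (real (j-k-1) + 1/2)^2 - Hk k)
     else pmid M (j - 2*k - 1))"

lemma posb_top: "j \<le> k \<Longrightarrow> posb k M j x = Hk k + 8 * x^2 - 8 * (x - real j)^2"
  by (simp add: posb_def power2_eq_square algebra_simps)

lemma posb_bot: "k < j \<Longrightarrow> j \<le> 2*k \<Longrightarrow> posb k M j x = - Hk k - 8 * x^2 + 8 * (x - real (j-k-1) - 1/2)^2"
  by (simp add: posb_def power2_eq_square algebra_simps)

lemma posb_mid: "2*k < j \<Longrightarrow> posb k M j x = pmid M (j - 2*k - 1)"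
  by (simp add: posb_def)

lemma pmid_bounds: "r < M \<Longrightarrow> -1 < pmid M r \<and> pmid M r < 1"
  by (auto simp: pmid_def field_simps)

lemma pmid_inj: "r < M \<Longrightarrow> r' < M \<Longrightarrow> pmid M r = pmid M r' \<Longrightarrow> r = r'"
  by (auto simp: pmid_def field_simps)

lemma sq_le_k:
  fixes x y :: real
  assumes "0 \<le> x" "x \<le> real k" "0 \<le> y" "y \<le> real k"
  shows "(x - y)^2 \<le> (real k)^2"
proof -
  have "\<bar>x - y\<bar> \<le> \<bar>real k\<bar>" using assms by auto
  then show ?thesis using abs_le_square_iff by blast
qed

lemma top_lb: "j \<le> k \<Longrightarrow> 0 \<le> x \<Longrightarrow> x \<le> real k \<Longrightarrow> 10 + 8 * x^2 \<le> posb k M j x"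
  using sq_le_k[of x k "real j"] by (simp add: posb_top Hk_def)

lemma bot_ub: "k < j \<Longrightarrow> j \<le> 2*k \<Longrightarrow> 0 \<le> x \<Longrightarrow> x \<le> real k \<Longrightarrow> posb k M j x \<le> -10 - 8 * x^2"
  using sq_le_k[of x k "real (j-k-1) + 1/2"] by (simp add: posb_bot Hk_def algebra_simps)

lemma top_ub: "j \<le> k \<Longrightarrow> 0 \<le> x \<Longrightarrow> x \<le> real k \<Longrightarrow> posb k M j x \<le> Hk k + 8 * (real k)^2"
proof -
  assume a: "j \<le> k" "0 \<le> x" "x \<le> real k"
  have "x^2 \<le> (real k)^2" using a by (simp add: power_mono)
  moreover have "0 \<le> (x - real j)^2" by simp
  ultimately show ?thesis unfolding posb_top[OF a(1)] by linarith
qed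

lemma bot_lb: "k < j \<Longrightarrow> j \<le> 2*k \<Longrightarrow> 0 \<le> x \<Longrightarrow> x \<le> real k \<Longrightarrow> - Hk k - 8 * (real k)^2 \<le> posb k M j x"
proof -
  assume a: "k < j" "j \<le> 2*k" "0 \<le> x" "x \<le> real k"
  have "x^2 \<le> (real k)^2" using a by (simp add: power_mono)
  moreover have "0 \<le> (x - real (j-k-1) - 1/2)^2" by simp
  ultimately show ?thesis unfolding posb_bot[OF a(1,2)] by linarith
qed

lemma top_cmp: "j \<le> k \<Longrightarrow> j' \<le> k \<Longrightarrow> \<bar>x - real j\<bar> \<le> \<bar>x - real j'\<bar> \<Longrightarrow> posb k M j' x \<le> posb k M j x"
  by (simp add: posb_top abs_le_square_iff)

lemma bot_cmp: "k < j \<Longrightarrow> j \<le> 2*k \<Longrightarrow> k < j' \<Longrightarrow> j' \<le> 2*k \<Longrightarrow>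
    \<bar>x - real (j-k-1) - 1/2\<bar> \<le> \<bar>x - real (j'-k-1) - 1/2\<bar> \<Longrightarrow> posb k M j x \<le> posb k M j' x"
  by (simp add: posb_bot abs_le_square_iff)

lemma big_extreme:
  assumes k: "k \<ge> 1" and n: "n = 2*k + 1 + M" and x: "0 \<le> x" "x \<le> real k"
    and ct: "ct \<le> k" and cb: "cb < k"
    and nt: "\<forall>j\<le>k. \<bar>x - real ct\<bar> \<le> \<bar>x - real j\<bar>"
    and nb: "\<forall>c'<k. \<bar>x - real cb - 1/2\<bar> \<le> \<bar>x - real c' - 1/2\<bar>"
  shows "\<forall>j<n. posb k M (k+1+cb) x \<le> posb k M j x \<and> posb k M j x \<le> posb k M ct x"
proof (intro allI impI)
  fix j assume j: "j < n"
  have x2: "0 \<le> x^2" by simp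
  have Tct: "10 + 8 * x^2 \<le> posb k M ct x" using top_lb[OF ct x] .
  have Bcb: "posb k M (k+1+cb) x \<le> -10 - 8 * x^2" using bot_ub[of k "k+1+cb"] cb x by auto
  consider "j \<le> k" | "k < j \<and> j \<le> 2*k" | "2*k < j" by linarith
  then show "posb k M (k+1+cb) x \<le> posb k M j x \<and> posb k M j x \<le> posb k M ct x"
  proof cases
    case 1
    have "posb k M j x \<le> posb k M ct x" using top_cmp[OF ct 1] nt 1 by auto
    moreover have "10 + 8 * x^2 \<le> posb k M j x" using top_lb[OF 1 x] .
    ultimately show ?thesis using Bcb x2 by linarith
  next
    case 2
    have jk: "j-k-1 < k" using 2 by auto
    have "\<bar>x - real ((k+1+cb)-k-1) - 1/2\<bar> \<le> \<bar>x - real (j-k-1) - 1/2\<bar>"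
      using nb jk by simp
    then have "posb k M (k+1+cb) x \<le> posb k M j x"
      using bot_cmp[of k "k+1+cb" j x M] 2 cb by auto
    moreover have "posb k M j x \<le> -10 - 8 * x^2" using bot_ub[of k j x M] 2 x by auto
    ultimately show ?thesis using Tct x2 by linarith
  next
    case 3
    have "j - 2*k - 1 < M" using 3 j n by auto
    then have "-1 < posb k M j x \<and> posb k M j x < 1" using pmid_bounds posb_mid[OF 3] by auto
    moreover have "0 \<le> x^2" by simp
    ultimately show ?thesis using Tct Bcb by linarith
  qed
qed

lemma others_ne:
  assumes k: "k \<ge> 1" and n: "n = 2*k + 1 + M" and x: "0 \<le> x" "x \<le> real k" and r: "r < M"
    and j: "j < n" "j \<noteq> 2*k+1+r"
  shows "posb k M j x \<noteq> posb k M (2*k+1+r) x"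
proof -
  have s: "posb k M (2*k+1+r) x = pmid M r" using posb_mid[of k "2*k+1+r"] by simp
  have sb: "-1 < pmid M r \<and> pmid M r < 1" using pmid_bounds r by auto
  have x2: "0 \<le> x^2" by simp
  consider "j \<le> k" | "k < j \<and> j \<le> 2*k" | "2*k < j" by linarith
  then show ?thesis
  proof cases
    case 1
    have "10 \<le> posb k M j x" using top_lb[OF 1 x, of M] x2 by linarith
    then show ?thesis using s sb by auto
  next
    case 2
    have "posb k M j x \<le> -10" using bot_ub[of k j x M] 2 x x2 by linarith
    then show ?thesis using s sb by auto
  next
    case 3
    have "j - 2*k - 1 < M" "j - 2*k - 1 \<noteq> r" using 3 j n by auto
    then show ?thesis using posb_mid[OF 3] s pmid_inj r by metis
  qed
qed

lemma strict_big:
  assumes k: "k \<ge> 1" and n: "n = 2*k + 1 + M" and r: "r < M"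
    and Xdef: "\<And>j. X j t = posb k M j (psi (real k) t)"
    and form: "\<exists>c<k. \<exists>x. 0 < x \<and> x < 1/2 \<and>
         ((psi (real k) t = real c + x \<and> pmid M r = 1 - 4*x) \<or>
          (psi (real k) t = real c + 1/2 + x \<and> pmid M r = 4*x - 1))"
  shows "\<forall>\<psi><n. \<psi> \<noteq> 2*k+1+r \<longrightarrow> Dmax n X (2*k+1+r) t < Dmax n X \<psi> t"
proof -
  define y where "y = psi (real k) t"
  have yr: "0 \<le> y" "y \<le> real k" using psi_range[of "real k" t] k by (auto simp: y_def)
  obtain c x where c: "c < k" and x: "0 < x" "x < 1/2" and
    f: "(y = real c + x \<and> pmid M r = 1 - 4*x) \<or> (y = real c + 1/2 + x \<and> pmid M r = 4*x - 1)"
    using form unfolding y_def[symmetric] by blast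
  have \<sigma>: "2*k+1+r < n" using n r by auto
  have smid: "posb k M (2*k+1+r) y = pmid M r" using posb_mid[of k "2*k+1+r"] by simp
  have oth: "\<forall>\<psi><n. \<psi> \<noteq> 2*k+1+r \<longrightarrow> X \<psi> t \<noteq> X (2*k+1+r) t"
    using others_ne[OF k n yr r] unfolding Xdef y_def[symmetric] by auto
  obtain ct cb where ctb: "ct \<le> k" "cb < k"
    and nt: "\<forall>j\<le>k. \<bar>y - real ct\<bar> \<le> \<bar>y - real j\<bar>"
    and nb: "\<forall>c'<k. \<bar>y - real cb - 1/2\<bar> \<le> \<bar>y - real c' - 1/2\<bar>"
    and midv: "pmid M r = (posb k M ct y + posb k M (k+1+cb) y)/2"
  proof (cases "y = real c + x \<and> pmid M r = 1 - 4*x")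
    case True
    have nt: "\<forall>j\<le>k. \<bar>y - real c\<bar> \<le> \<bar>y - real j\<bar>"
    proof (intro allI impI)
      fix j :: nat assume "j \<le> k"
      show "\<bar>y - real c\<bar> \<le> \<bar>y - real j\<bar>"
      proof (cases "j \<le> c")
        case True then have "real j \<le> real c" by simp
        then show ?thesis using \<open>y = real c + x \<and> _\<close> x by auto
      next
        case False then have "real c + 1 \<le> real j" by simp
        then show ?thesis using \<open>y = real c + x \<and> _\<close> x by auto
      qed
    qed
    have nb: "\<forall>c'<k. \<bar>y - real c - 1/2\<bar> \<le> \<bar>y - real c' - 1/2\<bar>"
    proof (intro allI impI)
      fix j :: nat assume "j < k"
      show "\<bar>y - real c - 1/2\<bar> \<le> \<bar>y - real j - 1/2\<bar>"
      proof (cases "c \<le> j")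
        case True then have "real c \<le> real j" by simp
        then show ?thesis using \<open>y = real c + x \<and> _\<close> x by auto
      next
        case False then have "real j + 1 \<le> real c" by simp
        then show ?thesis using \<open>y = real c + x \<and> _\<close> x by auto
      qed
    qed
    have "(posb k M c y + posb k M (k+1+c) y)/2 = 1 - 4*x"
      using c True by (simp add: posb_top posb_bot power2_eq_square field_simps)
    then show ?thesis using that[of c c] c nt nb True by auto
  next
    case False
    then have F: "y = real c + 1/2 + x" "pmid M r = 4*x - 1" using f by auto
    have nt: "\<forall>j\<le>k. \<bar>y - real (c+1)\<bar> \<le> \<bar>y - real j\<bar>"
    proof (intro allI impI)
      fix j :: nat assume "j \<le> k"
      show "\<bar>y - real (c+1)\<bar> \<le> \<bar>y - real j\<bar>"
      proof (cases "j \<le> c")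
        case True then have "real j \<le> real c" by simp
        then show ?thesis using F x by auto
      next
        case False then have "real c + 1 \<le> real j" by simp
        then show ?thesis using F x by auto
      qed
    qed
    have nb: "\<forall>c'<k. \<bar>y - real c - 1/2\<bar> \<le> \<bar>y - real c' - 1/2\<bar>"
    proof (intro allI impI)
      fix j :: nat assume "j < k"
      show "\<bar>y - real c - 1/2\<bar> \<le> \<bar>y - real j - 1/2\<bar>"
      proof (cases "c \<le> j")
        case True
        show ?thesis
        proof (cases "c = j")
          case True then show ?thesis by simp
        next
          case False then have "real c + 1 \<le> real j" using \<open>c \<le> j\<close> by simp
          then show ?thesis using F x by auto
        qed
      next
        case False then have "real j + 1 \<le> real c" by simp
        then show ?thesis using F x by auto
      qed
    qed
    have "(posb k M (c+1) y + posb k M (k+1+c) y)/2 = 4*x - 1"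
      using c F(2) by (simp add: F(1) posb_top posb_bot power2_eq_square field_simps)
    then show ?thesis using that[of "c+1" c] c nt nb F by auto
  qed
  have ext: "\<forall>j<n. posb k M (k+1+cb) y \<le> posb k M j y \<and> posb k M j y \<le> posb k M ct y"
    by (rule big_extreme[OF k n yr ctb nt nb])
  show ?thesis
  proof (rule strict_mid[where Mx = "posb k M ct y" and Mn = "posb k M (k+1+cb) y"])
    show "\<forall>j<n. posb k M (k+1+cb) y \<le> X j t \<and> X j t \<le> posb k M ct y"
      using ext unfolding Xdef y_def[symmetric] .
    show "\<exists>j<n. X j t = posb k M ct y" using ctb n by (intro exI[of _ ct]) (auto simp: Xdef y_def)
    show "\<exists>j<n. X j t = posb k M (k+1+cb) y" using ctb n by (intro exI[of _ "k+1+cb"]) (auto simp: Xdef y_def)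
    show "2*k+1+r < n" by (rule \<sigma>)
    show "X (2*k+1+r) t = (posb k M ct y + posb k M (k+1+cb) y)/2"
      using smid midv by (simp add: Xdef y_def)
    show "\<forall>\<psi><n. \<psi> \<noteq> 2*k+1+r \<longrightarrow> X \<psi> t \<noteq> X (2*k+1+r) t" by (rule oth)
  qed
qed

lemma psi_test:
  assumes k: "k \<ge> 1" and b: "b \<le> 1" and d: "0 < \<delta>" "\<delta> < 1/2"
  shows "(even (a div k) \<and> psi (real k) (real a + real b/2 + \<delta>) = real (a mod k) + real b/2 + \<delta>) \<or>
         (odd (a div k) \<and> psi (real k) (real a + real b/2 + \<delta>) = real (k - a mod k - 1) + (1 - real b)/2 + (1/2 - \<delta>))"
proof -
  define i where "i = a div k"
  have am: "real a = real i * real k + real (a mod k)" unfolding i_def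
    by (metis div_mult_mod_eq of_nat_add of_nat_mult)
  have modk: "a mod k < k" using k by auto
  then have modk': "real (a mod k) + 1 \<le> real k" by linarith
  have c2: "real (k - a mod k - 1) = real k - real (a mod k) - 1" using modk by (simp add: of_nat_diff)
  have bb: "real b \<le> 1" using b by simp
  have lo: "real i * real k \<le> real a + real b/2 + \<delta>" using am d by simp
  have hi: "real a + real b/2 + \<delta> \<le> (real i + 1) * real k" using am d modk' bb by (simp add: algebra_simps)
  have K: "real k > 0" using k by simp
  have eq: "psi (real k) (real a + real b/2 + \<delta>) = (if even i then real a + real b/2 + \<delta> - real i * real k
        else (real i + 1) * real k - (real a + real b/2 + \<delta>))"
    by (rule psi_on[OF K lo hi])
  show ?thesis
  proof (cases "even i")
    case True then show ?thesis using eq am by (simp add: i_def)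
  next
    case False
    have e: "psi (real k) (real a + real b/2 + \<delta>) = (real i + 1) * real k - (real a + real b/2 + \<delta>)"
      using eq False by simp
    have e2: "(real i + 1) * real k - (real a + real b/2 + \<delta>) = real (k - a mod k - 1) + (1 - real b)/2 + (1/2 - \<delta>)"
      unfolding c2 am by (simp add: field_simps)
    show ?thesis using False e e2 by (simp add: i_def)
  qed
qed

lemma big_test_strict:
  assumes k: "k \<ge> 1" and M: "M \<ge> 2" and n: "n = 2*k + 1 + M" and jj: "jj < M - 1"
    and Xdef: "\<And>j t. X j t = posb k M j (psi (real k) t)"
    and t: "t = real w / 2 + (2 * real jj + 1) / (4 * real M)"
    and r: "r = (if even w then M - 1 - jj else jj)"
  shows "\<forall>\<psi><n. \<psi> \<noteq> 2*k+1+r \<longrightarrow> Dmax n X (2*k+1+r) t < Dmax n X \<psi> t"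
proof -
  define \<delta> where "\<delta> = (2 * real jj + 1) / (4 * real M)"
  define a where "a = w div 2"
  define b where "b = w mod 2"
  have Mpos: "real M > 0" using M by simp
  have d: "0 < \<delta>" "\<delta> < 1/2" using jj M by (auto simp: \<delta>_def field_simps)
  have wab: "real w / 2 = real a + real b / 2"
  proof -
    have "w = 2 * a + b" by (simp add: a_def b_def)
    then have "real w = 2 * real a + real b" by simp
    then show ?thesis by simp
  qed
  have b1: "b \<le> 1" by (simp add: b_def)
  have tt: "t = real a + real b / 2 + \<delta>" using t wab by (simp add: \<delta>_def)
  have rM: "r < M" using r jj by auto
  have p1: "pmid M (M - 1 - jj) = 1 - 4 * \<delta>"
    using jj Mpos by (simp add: pmid_def \<delta>_def of_nat_diff field_simps)
  have p2: "pmid M jj = 4 * \<delta> - 1"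
    using Mpos by (simp add: pmid_def \<delta>_def field_simps)
  have ew: "even w \<longleftrightarrow> b = 0" by (simp add: b_def even_iff_mod_2_eq_zero)
  have c2k: "k - a mod k - 1 < k" using k by auto
  have c1k: "a mod k < k" using k by auto
  have form: "\<exists>c<k. \<exists>x. 0 < x \<and> x < 1/2 \<and>
         ((psi (real k) t = real c + x \<and> pmid M r = 1 - 4*x) \<or>
          (psi (real k) t = real c + 1/2 + x \<and> pmid M r = 4*x - 1))"
  proof -
    from psi_test[OF k b1 d, of a] show ?thesis
    proof
      assume A: "even (a div k) \<and> psi (real k) (real a + real b/2 + \<delta>) = real (a mod k) + real b/2 + \<delta>"
      show ?thesis
      proof (cases "b = 0")
        case True
        then show ?thesis using A tt p1 ew r d c1k by (intro exI[of _ "a mod k"] exI[of _ \<delta>]) auto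
      next
        case False
        then have "b = 1" using b1 by auto
        then show ?thesis using A tt p2 ew r d c1k by (intro exI[of _ "a mod k"] exI[of _ \<delta>]) auto
      qed
    next
      assume A: "odd (a div k) \<and> psi (real k) (real a + real b/2 + \<delta>) = real (k - a mod k - 1) + (1 - real b)/2 + (1/2 - \<delta>)"
      show ?thesis
      proof (cases "b = 0")
        case True
        then show ?thesis using A tt p1 ew r d c2k
          by (intro exI[of _ "k - a mod k - 1"]) (auto intro!: exI[of _ "1/2 - \<delta>"])
      next
        case False
        then have "b = 1" using b1 by auto
        then show ?thesis using A tt p2 ew r d c2k
          by (intro exI[of _ "k - a mod k - 1"]) (auto intro!: exI[of _ "1/2 - \<delta>"])
      qed
    qed
  qed
  show ?thesis by (rule strict_big[where X=X and t=t, OF k n rM Xdef form])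
qed

lemma from_tests:
  assumes inc: "strictly_increasing_times tt tau" and pl: "piecewise_linear_entities n X tt tau"
    and dist: "distinct_entities n X tt tau"
    and big: "\<forall>a<n. \<forall>b<n. \<forall>t\<in>{tt 0..tt tau}. \<bar>X a t - X b t\<bar> \<le> eps"
    and eps: "eps > 0" and n: "n > 0" and tau: "tau > 0"
    and Q: "Q > 0"
    and tin: "\<forall>q<Q. tt 0 < t q \<and> t q < tt tau"
    and sig: "\<forall>q<Q. \<sigma> q < n \<and> (\<forall>\<psi><n. \<psi> \<noteq> \<sigma> q \<longrightarrow> Dmax n X (\<sigma> q) (t q) < Dmax n X \<psi> (t q))"
    and gap: "gp > 0" "\<forall>q. Suc q < Q \<longrightarrow> t q + gp \<le> t (Suc q)"
    and sdiff: "\<forall>q. Suc q < Q \<longrightarrow> \<sigma> q \<noteq> \<sigma> (Suc q)"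
    and cnt: "c * real tau * real n ^ 2 \<le> real Q"
  shows "\<exists>eps tt X. eps > 0 \<and> strictly_increasing_times tt tau \<and>
          piecewise_linear_entities n X tt tau \<and> distinct_entities n X tt tau \<and>
          (\<exists>T. central_trajectory n X tt tau eps T) \<and>
          (\<forall>T. central_trajectory n X tt tau eps T \<longrightarrow>
                real (traj_complexity X tt tau T) \<ge> c * real tau * real n ^ 2)"
proof -
  have ex: "\<exists>T. central_trajectory n X tt tau eps T" using exists_central[OF inc pl big n tau] by blast
  have lb: "\<forall>T. central_trajectory n X tt tau eps T \<longrightarrow>
                real (traj_complexity X tt tau T) \<ge> c * real tau * real n ^ 2"
  proof (intro allI impI)
    fix T assume T: "central_trajectory n X tt tau eps T"
    have "Q \<le> traj_complexity X tt tau T"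
      by (rule complexity_lb[OF inc pl big n tau T Q tin sig gap sdiff])
    then show "c * real tau * real n ^ 2 \<le> real (traj_complexity X tt tau T)" using cnt by linarith
  qed
  show ?thesis using eps inc pl dist ex lb by blast
qed

lemma posb_lin: "\<exists>A B. \<forall>x. posb k M j x = A * x + B"
proof (cases "j \<le> k")
  case True then show ?thesis unfolding posb_def by (intro exI[of _ "16 * real j"] exI[of _ "Hk k - 8 * (real j)^2"]) simp
next
  case False
  show ?thesis
  proof (cases "j \<le> 2*k")
    case True then show ?thesis using False unfolding posb_def
      by (intro exI[of _ "- (8 * (2 * real (j-k-1) + 1))"] exI[of _ "8 * (real (j-k-1) + 1/2)^2 - Hk k"]) simp
  next
    case F2: False then show ?thesis using False unfolding posb_def
      by (intro exI[of _ 0] exI[of _ "pmid M (j - 2*k - 1)"]) simp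
  qed
qed

lemma posb_distinct:
  assumes k: "k \<ge> 1" and n: "n = 2*k + 1 + M" and i: "i < n" and j: "j < n" and ij: "i \<noteq> j"
  shows "posb k M i 0 \<noteq> posb k M j 0 \<or> posb k M i 1 \<noteq> posb k M j 1"
proof (rule ccontr)
  assume "\<not> ?thesis"
  then have e0: "posb k M i 0 = posb k M j 0" and e1: "posb k M i 1 = posb k M j 1" by auto
  define sl where "sl = (\<lambda>j. posb k M j 1 - posb k M j 0)"
  have sl_eq: "sl i = sl j" using e0 e1 by (simp add: sl_def)
  have slt: "j' \<le> k \<Longrightarrow> sl j' = 16 * real j'" for j' by (simp add: sl_def posb_def)
  have slb: "k < j' \<Longrightarrow> j' \<le> 2*k \<Longrightarrow> sl j' = - (8 * (2 * real (j'-k-1) + 1))" for j' by (simp add: sl_def posb_def)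
  have slm: "2*k < j' \<Longrightarrow> sl j' = 0" for j' by (simp add: sl_def posb_def)
  have hk: "Hk k \<ge> 10" by (simp add: Hk_def)
  have v0t: "posb k M 0 0 = Hk k" by (simp add: posb_def)
  have vm: "2*k < j' \<Longrightarrow> j' < n \<Longrightarrow> -1 < posb k M j' 0 \<and> posb k M j' 0 < 1" for j'
    using pmid_bounds[of "j' - 2*k - 1" M] posb_mid[of k j'] n by auto
  consider "i \<le> k" | "k < i \<and> i \<le> 2*k" | "2*k < i" by linarith
  note ci = this
  consider "j \<le> k" | "k < j \<and> j \<le> 2*k" | "2*k < j" by linarith
  note cj = this
  show False
  proof (cases rule: ci)
    case 1
    show False
    proof (cases rule: cj)
      case 1 then show False using sl_eq slt \<open>i \<le> k\<close> ij by auto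
    next
      case 2
      have "sl i \<ge> 0" using slt[OF \<open>i \<le> k\<close>] by simp
      moreover have "sl j < 0" using slb[of j] 2 by simp
      ultimately show False using sl_eq by simp
    next
      case 3
      then have "i = 0" using sl_eq slt slm \<open>i \<le> k\<close> by auto
      then show False using e0 v0t hk vm[OF 3 j] by auto
    qed
  next
    case 2
    show False
    proof (cases rule: cj)
      case 1
      have "sl j \<ge> 0" using slt[OF 1] by simp
      moreover have "sl i < 0" using slb[of i] 2 by simp
      ultimately show False using sl_eq by simp
    next
      case 2 then show False using sl_eq slb \<open>k < i \<and> i \<le> 2*k\<close> ij by auto
    next
      case 3
      have "sl j = 0" using slm[OF 3] by simp
      moreover have "sl i < 0" using slb[of i] 2 by simp
      ultimately show False using sl_eq by simp
    qed
  next
    case 3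
    show False
    proof (cases rule: cj)
      case 1
      then have "j = 0" using sl_eq slt slm 3 by auto
      then show False using e0 v0t hk vm[OF 3 i] by auto
    next
      case 2
      have "sl i = 0" using slm[OF 3] by simp
      moreover have "sl j < 0" using slb[of j] 2 by simp
      ultimately show False using sl_eq by simp
    next
      case 3
      have "i - 2*k - 1 < M" "j - 2*k - 1 < M" using i j n \<open>2*k < i\<close> 3 by auto
      moreover have "pmid M (i - 2*k - 1) = pmid M (j - 2*k - 1)"
        using e0 posb_mid[of k i] posb_mid[of k j] \<open>2*k < i\<close> 3 by auto
      ultimately have "i - 2*k - 1 = j - 2*k - 1" using pmid_inj by blast
      then show False using ij \<open>2*k < i\<close> 3 by auto
    qed
  qed
qed

lemma big_design:
  assumes n5: "n \<ge> 5" and tau1: "tau \<ge> 1"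
  shows "\<exists>eps tt X. eps > 0 \<and> strictly_increasing_times tt tau \<and>
          piecewise_linear_entities n X tt tau \<and> distinct_entities n X tt tau \<and>
          (\<exists>T. central_trajectory n X tt tau eps T) \<and>
          (\<forall>T. central_trajectory n X tt tau eps T \<longrightarrow>
                real (traj_complexity X tt tau T) \<ge> (1/50) * real tau * real n ^ 2)"
proof -
  define k where "k = (n - 1) div 4"
  define M where "M = n - 2*k - 1"
  have k1: "k \<ge> 1" using n5 by (auto simp: k_def)
  have k4: "4 * k \<le> n - 1" "n - 1 < 4 * k + 4" unfolding k_def by auto
  have M2: "M \<ge> 2" using k4 k1 by (auto simp: M_def)
  have nM: "n = 2*k + 1 + M" using k4 k1 n5 unfolding M_def by linarith
  have n8: "n \<le> 8 * k" using k4 k1 by auto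
  have Mk: "M - 1 \<ge> k" using k4 k1 by (auto simp: M_def)
  define tt where "tt = (\<lambda>i::nat. real k * real i)"
  define X where "X = (\<lambda>j t. posb k M j (psi (real k) t))"
  define eps where "eps = 2 * (Hk k + 8 * (real k)^2)"
  define m where "m = M - 1"
  define Q where "Q = 2 * k * tau * m"
  define t where "t = (\<lambda>q. real (q div m) / 2 + (2 * real (q mod m) + 1) / (4 * real M))"
  define \<sigma> where "\<sigma> = (\<lambda>q. 2*k+1+(if even (q div m) then M - 1 - q mod m else q mod m))"
  define gp where "gp = 1 / (2 * real M)"
  have m1: "m \<ge> 1" using M2 by (simp add: m_def)
  have Kpos: "real k > 0" using k1 by simp
  have Mpos: "real M > 0" using M2 by simp
  have inc: "strictly_increasing_times tt tau"
    using k1 by (simp add: strictly_increasing_times_def tt_def)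
  have pl: "piecewise_linear_entities n X tt tau"
    unfolding piecewise_linear_entities_def
  proof (intro allI impI)
    fix j i assume j: "j < n" and i: "i < tau"
    obtain A B where AB: "\<forall>x. posb k M j x = A * x + B" using posb_lin by blast
    show "\<exists>a b. \<forall>s\<in>{tt i..tt (Suc i)}. X j s = a * s + b"
    proof (cases "even i")
      case True
      show ?thesis
      proof (rule exI[of _ A], rule exI[of _ "B - A * real i * real k"], rule ballI)
        fix s assume s: "s \<in> {tt i..tt (Suc i)}"
        have "psi (real k) s = s - real i * real k"
          using psi_on[OF Kpos, of i s] s True by (auto simp: tt_def algebra_simps)
        note ps = this
        show "X j s = A * s + (B - A * real i * real k)" unfolding X_def ps AB[rule_format] by (simp add: algebra_simps)
      qed
    next
      case False
      show ?thesis
      proof (rule exI[of _ "-A"], rule exI[of _ "B + A * (real i + 1) * real k"], rule ballI)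
        fix s assume s: "s \<in> {tt i..tt (Suc i)}"
        have "psi (real k) s = (real i + 1) * real k - s"
          using psi_on[OF Kpos, of i s] s False by (auto simp: tt_def algebra_simps)
        note ps = this
        show "X j s = - A * s + (B + A * (real i + 1) * real k)" unfolding X_def ps AB[rule_format] by (simp add: algebra_simps)
      qed
    qed
  qed
  have psi0: "psi (real k) 0 = 0" using psi_on[OF Kpos, of 0 0] by simp
  have psi1: "psi (real k) 1 = 1" using psi_on[OF Kpos, of 0 1] k1 by simp
  have dist: "distinct_entities n X tt tau"
    unfolding distinct_entities_def
  proof (intro allI impI)
    fix i j assume ij: "i < n" "j < n" "i \<noteq> j"
    have "1 \<le> k * tau" using k1 tau1 by (simp add: Suc_le_eq)
    then have "(1::real) \<le> real (k * tau)" by linarith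
    then have "(1::real) \<le> real k * real tau" by simp
    then have "0 \<in> {tt 0..tt tau}" "1 \<in> {tt 0..tt tau}" using k1 tau1 by (auto simp: tt_def)
    moreover have "X i 0 \<noteq> X j 0 \<or> X i 1 \<noteq> X j 1"
      using posb_distinct[OF k1 nM ij] by (simp add: X_def psi0 psi1)
    ultimately show "\<exists>s\<in>{tt 0..tt tau}. X i s \<noteq> X j s" by blast
  qed
  have bnd: "\<bar>X j s\<bar> \<le> Hk k + 8 * (real k)^2" if j: "j < n" for j s
  proof -
    define y where "y = psi (real k) s"
    have y: "0 \<le> y" "y \<le> real k" using psi_range[OF Kpos, of s] by (auto simp: y_def)
    have y2: "0 \<le> y^2" by simp
    have h10: "10 \<le> Hk k" by (simp add: Hk_def)
    have Xj: "X j s = posb k M j y" by (simp add: X_def y_def)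
    have k2: "0 \<le> (real k)^2" by simp
    consider "j \<le> k" | "k < j \<and> j \<le> 2*k" | "2*k < j" by linarith
    then show ?thesis
    proof cases
      case 1
      have "10 + 8 * y^2 \<le> posb k M j y" "posb k M j y \<le> Hk k + 8 * (real k)^2"
        using top_lb[OF 1 y, of M] top_ub[OF 1 y, of M] by auto
      then show ?thesis unfolding Xj abs_le_iff using y2 h10 k2 by linarith
    next
      case 2
      have "- Hk k - 8 * (real k)^2 \<le> posb k M j y" "posb k M j y \<le> -10 - 8 * y^2"
        using bot_lb[of k j y M] bot_ub[of k j y M] y 2 by auto
      then show ?thesis unfolding Xj abs_le_iff using y2 h10 k2 by linarith
    next
      case 3
      have "j - 2*k - 1 < M" using 3 j nM by auto
      then have "\<bar>posb k M j y\<bar> < 1" using pmid_bounds posb_mid[OF 3] by (simp add: abs_less_iff)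
      then show ?thesis unfolding Xj using h10 k2 by linarith
    qed
  qed
  have big: "\<forall>a<n. \<forall>b<n. \<forall>s\<in>{tt 0..tt tau}. \<bar>X a s - X b s\<bar> \<le> eps"
  proof (intro allI impI ballI)
    fix a b s assume "a < n" "b < n"
    then have "\<bar>X a s\<bar> \<le> Hk k + 8 * (real k)^2" "\<bar>X b s\<bar> \<le> Hk k + 8 * (real k)^2" using bnd by auto
    then show "\<bar>X a s - X b s\<bar> \<le> eps" unfolding eps_def by (simp add: abs_le_iff)
  qed
  have eps: "eps > 0"
  proof -
    have h: "0 \<le> (real k)^2" by simp
    have "eps = 20 + 32 * (real k)^2" unfolding eps_def Hk_def by simp
    moreover have "0 < 20 + 32 * (real k)^2" by (intro add_pos_nonneg) auto
    ultimately show ?thesis by simp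
  qed
  have Q: "Q > 0" using k1 tau1 m1 by (simp add: Q_def)
  have qdiv: "q div m < 2 * k * tau" if "q < Q" for q
    using that m1 by (simp add: Q_def less_mult_imp_div_less)
  have qmod: "q mod m < m" for q using m1 by simp
  have dlt: "(2 * real (q mod m) + 1) / (4 * real M) < 1/2" for q
  proof -
    have "q mod m + 1 \<le> m" using qmod[of q] by simp
    then have "2 * real (q mod m) + 1 < 2 * real M" using m1 by (simp add: m_def of_nat_diff)
    then show ?thesis using Mpos by (simp add: field_simps)
  qed
  have dpos: "(2 * real (q mod m) + 1) / (4 * real M) > 0" for q using Mpos by simp
  have tin: "\<forall>q<Q. tt 0 < t q \<and> t q < tt tau"
  proof (intro allI impI)
    fix q assume q: "q < Q"
    have "q div m + 1 \<le> 2 * k * tau" using qdiv[OF q] by simp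
    then have "real (q div m) + 1 \<le> 2 * real k * real tau" by (metis of_nat_1 of_nat_add of_nat_le_iff of_nat_mult of_nat_numeral)
    moreover have "t q < real (q div m)/2 + 1/2" using dlt[of q] by (simp add: t_def)
    moreover have "0 < t q" using dpos[of q] by (simp add: t_def add_nonneg_pos)
    ultimately show "tt 0 < t q \<and> t q < tt tau" by (simp add: tt_def)
  qed
  have sig: "\<forall>q<Q. \<sigma> q < n \<and> (\<forall>\<psi><n. \<psi> \<noteq> \<sigma> q \<longrightarrow> Dmax n X (\<sigma> q) (t q) < Dmax n X \<psi> (t q))"
  proof (intro allI impI)
    fix q assume q: "q < Q"
    have A: "\<sigma> q < n" using nM qmod[of q] by (auto simp: \<sigma>_def m_def)
    have jj: "q mod m < M - 1" using qmod[of q] by (simp add: m_def)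
    have B: "\<forall>\<psi><n. \<psi> \<noteq> \<sigma> q \<longrightarrow> Dmax n X (\<sigma> q) (t q) < Dmax n X \<psi> (t q)"
      unfolding \<sigma>_def
      by (rule big_test_strict[OF k1 M2 nM jj, of X "t q" "q div m"])
         (auto simp: X_def t_def m_def)
    show "\<sigma> q < n \<and> (\<forall>\<psi><n. \<psi> \<noteq> \<sigma> q \<longrightarrow> Dmax n X (\<sigma> q) (t q) < Dmax n X \<psi> (t q))"
      using A B by blast
  qed
  have step: "(Suc q div m = q div m \<and> Suc q mod m = Suc (q mod m)) \<or>
              (Suc q div m = Suc (q div m) \<and> Suc q mod m = 0 \<and> q mod m = m - 1)" for q
    using qmod[of q] by (auto simp: div_Suc mod_Suc)
  have gap: "gp > 0" "\<forall>q. Suc q < Q \<longrightarrow> t q + gp \<le> t (Suc q)"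
  proof -
    show "gp > 0" using Mpos by (simp add: gp_def)
    show "\<forall>q. Suc q < Q \<longrightarrow> t q + gp \<le> t (Suc q)"
    proof (intro allI impI)
      fix q assume "Suc q < Q"
      from step[of q] show "t q + gp \<le> t (Suc q)"
      proof
        assume A: "Suc q div m = q div m \<and> Suc q mod m = Suc (q mod m)"
        show ?thesis using A Mpos by (simp add: t_def gp_def field_simps)
      next
        assume B: "Suc q div m = Suc (q div m) \<and> Suc q mod m = 0 \<and> q mod m = m - 1"
        have jr: "real (q mod m) = real M - 2" using B M2 by (simp add: m_def of_nat_diff)
        have e1: "t (Suc q) = real (q div m)/2 + (1/2 + 1/(4*real M))" using B by (simp add: t_def)
        have e2: "t q + gp = real (q div m)/2 + ((2*(real M - 2) + 1)/(4*real M) + 1/(2*real M))"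
          using jr by (simp add: t_def gp_def)
        have "(2*(real M - 2) + 1)/(4*real M) + 1/(2*real M) \<le> 1/2 + 1/(4*real M)"
          using Mpos by (simp add: field_simps)
        then show ?thesis unfolding e1 e2 by linarith
      qed
    qed
  qed
  have sdiff: "\<forall>q. Suc q < Q \<longrightarrow> \<sigma> q \<noteq> \<sigma> (Suc q)"
  proof (intro allI impI)
    fix q assume "Suc q < Q"
    have qm: "q mod m < m" by (rule qmod)
    from step[of q] show "\<sigma> q \<noteq> \<sigma> (Suc q)"
    proof
      assume A: "Suc q div m = q div m \<and> Suc q mod m = Suc (q mod m)"
      have "Suc (q mod m) < m" using A qmod[of "Suc q"] by simp
      then show ?thesis using A by (auto simp: \<sigma>_def m_def)
    next
      assume B: "Suc q div m = Suc (q div m) \<and> Suc q mod m = 0 \<and> q mod m = m - 1"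
      then show ?thesis using M2 by (auto simp: \<sigma>_def m_def)
    qed
  qed
  have cnt: "(1/50) * real tau * real n ^ 2 \<le> real Q"
  proof -
    have "real n \<le> 8 * real k" using n8 by simp
    then have "real n ^ 2 \<le> (8 * real k)^2" by (intro power_mono) auto
    then have a: "real n ^ 2 \<le> 64 * (real k)^2" by (simp add: power_mult_distrib)
    have "real k \<le> real m" using Mk by (simp add: m_def)
    then have b: "2 * real k * real tau * real k \<le> real Q"
      unfolding Q_def using tau1 by (simp add: mult_left_mono)
    have "(1/50) * real tau * real n ^ 2 \<le> (1/50) * real tau * (64 * (real k)^2)"
      using a by (intro mult_left_mono) auto
    also have "\<dots> \<le> 2 * real k * real tau * real k" by (simp add: power2_eq_square)
    finally show ?thesis using b by linarith
  qed
  show ?thesis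
    by (rule from_tests[OF inc pl dist big eps _ _ Q tin sig gap sdiff cnt]) (use n5 tau1 in auto)
qed

definition sm :: "nat \<Rightarrow> real \<Rightarrow> real" where
  "sm j x = (if j = 0 then 0 else if j = 1 then -10 else if j = 2 then 9 - 18 * x else -11)"

lemma small_strict:
  assumes n: "n = 3 \<or> n = 4" and Xd: "\<And>j. X j t = sm j x"
    and x: "x = 0 \<or> x = 1/4 \<or> x = 3/4 \<or> x = 1" and \<sigma>: "\<sigma> = (if x \<le> 1/4 then 0 else 2)"
  shows "\<forall>\<psi><n. \<psi> \<noteq> \<sigma> \<longrightarrow> Dmax n X \<sigma> t < Dmax n X \<psi> t"
proof -
  define Mx where "Mx = (if x \<le> 1/4 then 9 - 18 * x else (0::real))"
  define Mn where "Mn = (if n = 4 then -11 else (-10::real))"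
  have jcases: "j < n \<Longrightarrow> j = 0 \<or> j = 1 \<or> j = 2 \<or> (j = 3 \<and> n = 4)" for j using n by auto
  have b: "\<forall>j<n. Mn \<le> X j t \<and> X j t \<le> Mx"
  proof (intro allI impI)
    fix j assume "j < n"
    then show "Mn \<le> X j t \<and> X j t \<le> Mx" using jcases[of j] x n
      by (auto simp: Xd sm_def Mx_def Mn_def)
  qed
  have ax: "\<exists>j<n. X j t = Mx"
  proof (cases "x \<le> 1/4")
    case True then show ?thesis using n by (intro exI[of _ 2]) (auto simp: Xd sm_def Mx_def)
  next
    case False then show ?thesis using n by (intro exI[of _ 0]) (auto simp: Xd sm_def Mx_def)
  qed
  have an: "\<exists>j<n. X j t = Mn"
  proof (cases "n = 4")
    case True then show ?thesis by (intro exI[of _ 3]) (auto simp: Xd sm_def Mn_def)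
  next
    case False then show ?thesis using n by (intro exI[of _ 1]) (auto simp: Xd sm_def Mn_def)
  qed
  have D: "Dmax n X j t = max (sm j x - Mn) (Mx - sm j x)" if "j < n" for j
    using Dmax_via_bounds[where X=X and t=t and n=n and Mn=Mn and Mx=Mx, OF b ax an that] by (simp add: Xd)
  have \<sigma>n: "\<sigma> < n" using n \<sigma> by auto
  show ?thesis
  proof (intro allI impI)
    fix \<psi> assume \<psi>: "\<psi> < n" "\<psi> \<noteq> \<sigma>"
    show "Dmax n X \<sigma> t < Dmax n X \<psi> t"
      unfolding D[OF \<sigma>n] D[OF \<psi>(1)] using jcases[OF \<psi>(1)] \<psi>(2) x n \<sigma>
      by (auto simp: sm_def Mx_def Mn_def max_def)
  qed
qed


lemma small_design:
  assumes n: "n = 3 \<or> n = 4" and tau1: "tau \<ge> 1"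
  shows "\<exists>eps tt X. eps > 0 \<and> strictly_increasing_times tt tau \<and>
          piecewise_linear_entities n X tt tau \<and> distinct_entities n X tt tau \<and>
          (\<exists>T. central_trajectory n X tt tau eps T) \<and>
          (\<forall>T. central_trajectory n X tt tau eps T \<longrightarrow>
                real (traj_complexity X tt tau T) \<ge> (1/50) * real tau * real n ^ 2)"
proof -
  define tt where "tt = (\<lambda>i::nat. real i)"
  define X where "X = (\<lambda>j t. sm j (psi 1 t))"
  define eps where "eps = (22::real)"
  define Q where "Q = tau + 1"
  define t where "t = (\<lambda>q. if q = 0 then 1/4 else if q = tau then real tau - 1/4 else real q)"
  define \<sigma> where "\<sigma> = (\<lambda>q::nat. if even q then 0 else (2::nat))"
  define gp where "gp = (1/2::real)"
  have K: "(1::real) > 0" by simp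
  have inc: "strictly_increasing_times tt tau" by (simp add: strictly_increasing_times_def tt_def)
  have smlin: "\<exists>A B. \<forall>x. sm j x = A * x + B" for j
  proof -
    have "\<forall>x. sm j x = (if j = 2 then -18 else 0) * x + (if j = 0 then 0 else if j = 1 then -10 else if j = 2 then 9 else -11)"
      by (auto simp: sm_def)
    then show ?thesis by blast
  qed
  have pl: "piecewise_linear_entities n X tt tau"
    unfolding piecewise_linear_entities_def
  proof (intro allI impI)
    fix j i assume j: "j < n" and i: "i < tau"
    obtain A B where AB: "\<forall>x. sm j x = A * x + B" using smlin by blast
    show "\<exists>a b. \<forall>s\<in>{tt i..tt (Suc i)}. X j s = a * s + b"
    proof (cases "even i")
      case True
      show ?thesis
      proof (rule exI[of _ A], rule exI[of _ "B - A * real i"], rule ballI)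
        fix s assume s: "s \<in> {tt i..tt (Suc i)}"
        have ps: "psi 1 s = s - real i" using psi_on[OF K, of i s] s True by (auto simp: tt_def)
        show "X j s = A * s + (B - A * real i)" unfolding X_def ps AB[rule_format] by (simp add: algebra_simps)
      qed
    next
      case False
      show ?thesis
      proof (rule exI[of _ "-A"], rule exI[of _ "B + A * (real i + 1)"], rule ballI)
        fix s assume s: "s \<in> {tt i..tt (Suc i)}"
        have ps: "psi 1 s = (real i + 1) - s" using psi_on[OF K, of i s] s False by (auto simp: tt_def)
        show "X j s = - A * s + (B + A * (real i + 1))" unfolding X_def ps AB[rule_format] by (simp add: algebra_simps)
      qed
    qed
  qed
  have psi0: "psi 1 0 = 0" using psi_on[OF K, of 0 0] by simp
  have dist: "distinct_entities n X tt tau"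
    unfolding distinct_entities_def
  proof (intro allI impI)
    fix i j assume ij: "i < n" "j < n" "i \<noteq> j"
    have "0 \<in> {tt 0..tt tau}" by (simp add: tt_def)
    moreover have "X i 0 \<noteq> X j 0"
      using ij n by (auto simp: X_def psi0 sm_def)
    ultimately show "\<exists>s\<in>{tt 0..tt tau}. X i s \<noteq> X j s" by blast
  qed
  have bnd: "\<bar>X j s\<bar> \<le> 11" for j s
  proof -
    have "0 \<le> psi 1 s" "psi 1 s \<le> 1" using psi_range[OF K, of s] by auto
    then show ?thesis by (auto simp: X_def sm_def abs_le_iff)
  qed
  have big: "\<forall>a<n. \<forall>b<n. \<forall>s\<in>{tt 0..tt tau}. \<bar>X a s - X b s\<bar> \<le> eps"
  proof (intro allI impI ballI)
    fix a b s
    have "\<bar>X a s\<bar> \<le> 11" "\<bar>X b s\<bar> \<le> 11" using bnd by auto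
    then show "\<bar>X a s - X b s\<bar> \<le> eps" unfolding eps_def by (simp add: abs_le_iff)
  qed
  have Q: "Q > 0" by (simp add: Q_def)
  have tin: "\<forall>q<Q. tt 0 < t q \<and> t q < tt tau"
    using tau1 by (auto simp: Q_def t_def tt_def)
  have psiq: "(even q \<longrightarrow> psi 1 (t q) = 0 \<or> psi 1 (t q) = 1/4) \<and>
              (odd q \<longrightarrow> psi 1 (t q) = 3/4 \<or> psi 1 (t q) = 1)" if q: "q < Q" for q
  proof (cases "q = 0")
    case True
    have "psi 1 (1/4) = 1/4" using psi_on[OF K, of 0 "1/4"] by simp
    then show ?thesis using True by (simp add: t_def)
  next
    case F0: False
    show ?thesis
    proof (cases "q = tau")
      case True
      have tq: "t q = real tau - 1/4" using True F0 by (simp add: t_def)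
      have ri: "real (tau - 1) = real tau - 1" using tau1 by (simp add: of_nat_diff)
      have "psi 1 (real tau - 1/4) = (if even (tau - 1) then (real tau - 1/4) - real (tau - 1) * 1
          else (real (tau - 1) + 1) * 1 - (real tau - 1/4))"
        by (rule psi_on[OF K]) (use ri in auto)
      moreover have "even (tau - 1) \<longleftrightarrow> odd tau" using tau1 by (cases tau) auto
      ultimately show ?thesis using True tq ri by auto
    next
      case False
      have tq: "t q = real q" using False F0 by (simp add: t_def)
      have "psi 1 (real q) = (if even q then real q - real q * 1 else (real q + 1) * 1 - real q)"
        by (rule psi_on[OF K]) auto
      then show ?thesis using tq by auto
    qed
  qed
  have sig: "\<forall>q<Q. \<sigma> q < n \<and> (\<forall>\<psi><n. \<psi> \<noteq> \<sigma> q \<longrightarrow> Dmax n X (\<sigma> q) (t q) < Dmax n X \<psi> (t q))"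
  proof (intro allI impI)
    fix q assume q: "q < Q"
    have A: "\<sigma> q < n" using n by (auto simp: \<sigma>_def)
    have xv: "psi 1 (t q) = 0 \<or> psi 1 (t q) = 1/4 \<or> psi 1 (t q) = 3/4 \<or> psi 1 (t q) = 1"
      using psiq[OF q] by (cases "even q") auto
    have sq: "\<sigma> q = (if psi 1 (t q) \<le> 1/4 then 0 else 2)"
      using psiq[OF q] by (cases "even q") (auto simp: \<sigma>_def)
    have B: "\<forall>\<psi><n. \<psi> \<noteq> \<sigma> q \<longrightarrow> Dmax n X (\<sigma> q) (t q) < Dmax n X \<psi> (t q)"
      by (rule small_strict[OF n _ xv sq]) (simp add: X_def)
    show "\<sigma> q < n \<and> (\<forall>\<psi><n. \<psi> \<noteq> \<sigma> q \<longrightarrow> Dmax n X (\<sigma> q) (t q) < Dmax n X \<psi> (t q))"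
      using A B by blast
  qed
  have gap: "gp > 0" "\<forall>q. Suc q < Q \<longrightarrow> t q + gp \<le> t (Suc q)"
    using tau1 by (auto simp: gp_def Q_def t_def)
  have sdiff: "\<forall>q. Suc q < Q \<longrightarrow> \<sigma> q \<noteq> \<sigma> (Suc q)" by (auto simp: \<sigma>_def)
  have cnt: "(1/50) * real tau * real n ^ 2 \<le> real Q"
  proof -
    have "real n ^ 2 \<le> 16" using n by auto
    then have "(1/50) * real tau * real n ^ 2 \<le> (1/50) * real tau * 16"
      by (intro mult_left_mono) auto
    then show ?thesis by (simp add: Q_def)
  qed
  show ?thesis
    by (rule from_tests[OF inc pl dist big _ _ _ Q tin sig gap sdiff cnt]) (use n tau1 in \<open>auto simp: eps_def\<close>)
qed

theorem mainTheorem3: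
  "\<exists>c::real. c > 0 \<and>
     (\<forall>n::nat. \<forall>tau::nat. n \<ge> 3 \<longrightarrow> tau \<ge> 1 \<longrightarrow>
       (\<exists>eps::real. \<exists>tt::nat \<Rightarrow> real. \<exists>X::nat \<Rightarrow> real \<Rightarrow> real.
          eps > 0 \<and> strictly_increasing_times tt tau \<and>
          piecewise_linear_entities n X tt tau \<and> distinct_entities n X tt tau \<and>
          (\<exists>T. central_trajectory n X tt tau eps T) \<and>
          (\<forall>T. central_trajectory n X tt tau eps T \<longrightarrow>
                real (traj_complexity X tt tau T) \<ge> c * real tau * real n ^ 2)))"
proof (rule exI[of _ "1/50"], intro conjI allI impI)
  show "(0::real) < 1/50" by simp
  fix n tau :: nat assume n: "n \<ge> 3" and tau: "tau \<ge> 1"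
  show "\<exists>eps::real. \<exists>tt::nat \<Rightarrow> real. \<exists>X::nat \<Rightarrow> real \<Rightarrow> real.
          eps > 0 \<and> strictly_increasing_times tt tau \<and>
          piecewise_linear_entities n X tt tau \<and> distinct_entities n X tt tau \<and>
          (\<exists>T. central_trajectory n X tt tau eps T) \<and>
          (\<forall>T. central_trajectory n X tt tau eps T \<longrightarrow>
                real (traj_complexity X tt tau T) \<ge> (1/50) * real tau * real n ^ 2)"
  proof (cases "n \<ge> 5")
    case True then show ?thesis using big_design[OF True tau] by blast
  next
    case False
    then have "n = 3 \<or> n = 4" using n by auto
    then show ?thesis using small_design[OF _ tau] by blast
  qed
qed

end
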